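(* When $m=2$, the bound $R_{ach}(\mathbf{D})$ of the simultaneous-decoding achievability theorem satisfies $$R_{ach}(\mathbf{D})\le R^T(\mathbf{D})=\min\Big[\max_{i\in\{1,2\}}I(X;U_{\{1,2\}}|Y_i)+I(X;U_{\{1\}}|U_{\{1,2\}},Y_1)+I(X;U_{\{2\}}|U_{\{1,2\}},Y_2)\Big],$$ where the minimum is over joint distributions of $(U_{\{1,2\}},U_{\{1\}},U_{\{2\}},X,Y_1,Y_2)$ with finite-alphabet auxiliaries such that the marginal of $(X,Y_1,Y_2)$ is the given one, $(U_{\{1,2\}},U_{\{1\}},U_{\{2\}})\leftrightarrow X\leftrightarrow(Y_1,Y_2)$, and there exist functions $g_l$ with $E[d_l(X,g_l(U_{\{1,2\}},U_{\{l\}},Y_l))]\le D_l$ for $l=1,2$.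
   Context: Finite-alphabet setting: source $X$, side informations $Y_1,Y_2$ at two decoders, distortion measures $d_l$, constraints $D_l$. $R_{ach}(\mathbf{D})$ is the lower convex envelope in $\mathbf{D}$ of $R'_{ach}(\mathbf{D})=\min_v\inf_p\inf\sum_j R_{\mathcal{S}_j}$ where: $v=(\mathcal{S}_1,\mathcal{S}_2,\mathcal{S}_3)$ ranges over orderings of the nonempty subsets of $\{1,2\}$; $p$ ranges over joint distributions of finite-alphabet $(U_{\mathcal{S}_1},U_{\mathcal{S}_2},U_{\mathcal{S}_3})$ with $(X,Y_1,Y_2)$ having the given $(X,Y_1,Y_2)$-marginal, with $\mathcal{U}\leftrightarrow X\leftrightarrow(Y_1,Y_2)$ and functions $g_l(U_{\mathcal{D}_l},Y_l)$ meeting $E d_l\le D_l$; and the inner infimum is over nonnegative $R_{\mathcal{S}_j},R'_{\mathcal{S}_j}$ with $R_{\mathcal{S}_j}+R'_{\mathcal{S}_j}\ge I(X,U^-_{\mathcal{S}_j};U_{\mathcal{S}_j})$ and, for each $l$ and nonempty $\mathcal{D}'_l\subseteq\mathcal{D}_l$, $\sum_{\mathcal{S}_j\in\mathcal{D}'_l}R'_{\mathcal{S}_j}\le\sum_{\mathcal{S}_j\in\mathcal{D}'_l}H(U_{\mathcal{S}_j})-H(U_{\mathcal{D}'_l}|U_{\mathcal{D}_l\setminus\mathcal{D}'_l},Y_l)$. Here $\mathcal{D}_l=\{\mathcal{S}:l\in\mathcal{S}\}$, $U_{\mathcal{D}'}=\{U_\mathcal{S}:\mathcal{S}\in\mathcal{D}'\}$,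 $U^-_{\mathcal{S}_j}=\{U_{\mathcal{S}_i}:i<j\}$. *)

theory Defs
  imports Complex_Main "HOL-Library.Extended_Real"
begin

definition supp :: "('w \<Rightarrow> real) \<Rightarrow> 'w set" where
  "supp p = {w. p w \<noteq> 0}"

definition is_dist :: "('w \<Rightarrow> real) \<Rightarrow> bool" where
  "is_dist p \<longleftrightarrow> finite (supp p) \<and> (\<forall>w. 0 \<le> p w) \<and> (\<Sum>w\<in>supp p. p w) = 1"

definition prob :: "('w \<Rightarrow> real) \<Rightarrow> ('w \<Rightarrow> 'v) \<Rightarrow> 'v \<Rightarrow> real" where
  "prob p f v = (\<Sum>w\<in>{w\<in>supp p. f w = v}. p w)"

definition expect :: "('w \<Rightarrow> real) \<Rightarrow> ('w \<Rightarrow> real) \<Rightarrow> real" where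
  "expect p f = (\<Sum>w\<in>supp p. p w * f w)"

definition entropy :: "('w \<Rightarrow> real) \<Rightarrow> ('w \<Rightarrow> 'v) \<Rightarrow> real" where
  "entropy p f = - (\<Sum>v\<in>f ` supp p. prob p f v * log 2 (prob p f v))"

definition cond_entropy :: "('w \<Rightarrow> real) \<Rightarrow> ('w \<Rightarrow> 'v) \<Rightarrow> ('w \<Rightarrow> 'u) \<Rightarrow> real" where
  "cond_entropy p f g = entropy p (\<lambda>w. (f w, g w)) - entropy p g"

definition mutual_info :: "('w \<Rightarrow> real) \<Rightarrow> ('w \<Rightarrow> 'v) \<Rightarrow> ('w \<Rightarrow> 'u) \<Rightarrow> real" where
  "mutual_info p f g = entropy p f - cond_entropy p f g"

definition cond_mutual_info ::
  "('w \<Rightarrow> real) \<Rightarrow> ('w \<Rightarrow> 'v) \<Rightarrow> ('w \<Rightarrow> 'u) \<Rightarrow> ('w \<Rightarrow> 't) \<Rightarrow> real" where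
  "cond_mutual_info p f g h = cond_entropy p f h - cond_entropy p f (\<lambda>w. (g w, h w))"

definition markov :: "('w \<Rightarrow> real) \<Rightarrow> ('w \<Rightarrow> 'a) \<Rightarrow> ('w \<Rightarrow> 'b) \<Rightarrow> ('w \<Rightarrow> 'c) \<Rightarrow> bool" where
  "markov p f g h \<longleftrightarrow> (\<forall>a b c.
     prob p (\<lambda>w. (f w, g w, h w)) (a, b, c) * prob p g b
       = prob p (\<lambda>w. (f w, g w)) (a, b) * prob p (\<lambda>w. (g w, h w)) (b, c))"

section \<open>Outcome space: ((U_0,U_1,U_2), X, Y_1, Y_2); auxiliaries are nat-valued
  with finite support (= arbitrary finite alphabets)\<close>

definition uc :: "nat \<Rightarrow> ((nat \<times> nat \<times> nat) \<times> 'x \<times> 'y1 \<times> 'y2) \<Rightarrow> nat" where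
  "uc j w = (case fst w of (a, b, c) \<Rightarrow> if j = 0 then a else if j = 1 then b else c)"

definition xc :: "((nat \<times> nat \<times> nat) \<times> 'x \<times> 'y1 \<times> 'y2) \<Rightarrow> 'x" where
  "xc w = fst (snd w)"

definition y1c :: "((nat \<times> nat \<times> nat) \<times> 'x \<times> 'y1 \<times> 'y2) \<Rightarrow> 'y1" where
  "y1c w = fst (snd (snd w))"

definition y2c :: "((nat \<times> nat \<times> nat) \<times> 'x \<times> 'y1 \<times> 'y2) \<Rightarrow> 'y2" where
  "y2c w = snd (snd (snd w))"

definition usub :: "nat set \<Rightarrow> ((nat \<times> nat \<times> nat) \<times> 'x \<times> 'y1 \<times> 'y2) \<Rightarrow> (nat \<Rightarrow> nat)" where
  "usub J w = (\<lambda>j. if j \<in> J then uc j w else 0)"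

text \<open>Positions j (0-based) of the subsets S_{j+1} of the ordering v containing l.\<close>
definition dec :: "nat set list \<Rightarrow> nat \<Rightarrow> nat set" where
  "dec v l = {j. j < 3 \<and> l \<in> v ! j}"

definition ach_feasible ::
  "('x \<times> 'y1 \<times> 'y2 \<Rightarrow> real) \<Rightarrow> ('x \<Rightarrow> 'z1 \<Rightarrow> real) \<Rightarrow> ('x \<Rightarrow> 'z2 \<Rightarrow> real) \<Rightarrow> real \<Rightarrow> real
    \<Rightarrow> nat set list \<Rightarrow> ((nat \<times> nat \<times> nat) \<times> 'x \<times> 'y1 \<times> 'y2 \<Rightarrow> real)
    \<Rightarrow> (nat \<Rightarrow> real) \<Rightarrow> (nat \<Rightarrow> real) \<Rightarrow> bool" where
  "ach_feasible PXY d1 d2 D1 D2 v p R R' \<longleftrightarrow>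
     set v = {{1}, {2}, {1, 2}} \<and> distinct v \<and>
     is_dist p \<and> prob p snd = PXY \<and>
     markov p fst xc (\<lambda>w. (y1c w, y2c w)) \<and>
     (\<exists>(g1 :: (nat \<Rightarrow> nat) \<Rightarrow> 'y1 \<Rightarrow> 'z1) (g2 :: (nat \<Rightarrow> nat) \<Rightarrow> 'y2 \<Rightarrow> 'z2).
        expect p (\<lambda>w. d1 (xc w) (g1 (usub (dec v 1) w) (y1c w))) \<le> D1 \<and>
        expect p (\<lambda>w. d2 (xc w) (g2 (usub (dec v 2) w) (y2c w))) \<le> D2) \<and>
     (\<forall>j<3. 0 \<le> R j \<and> 0 \<le> R' j \<and>
        mutual_info p (\<lambda>w. (xc w, usub {..<j} w)) (uc j) \<le> R j + R' j) \<and>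
     (\<forall>J. J \<noteq> {} \<and> J \<subseteq> dec v 1 \<longrightarrow>
        (\<Sum>j\<in>J. R' j) \<le> (\<Sum>j\<in>J. entropy p (uc j))
           - cond_entropy p (usub J) (\<lambda>w. (usub (dec v 1 - J) w, y1c w))) \<and>
     (\<forall>J. J \<noteq> {} \<and> J \<subseteq> dec v 2 \<longrightarrow>
        (\<Sum>j\<in>J. R' j) \<le> (\<Sum>j\<in>J. entropy p (uc j))
           - cond_entropy p (usub J) (\<lambda>w. (usub (dec v 2 - J) w, y2c w)))"

definition Rach' ::
  "('x \<times> 'y1 \<times> 'y2 \<Rightarrow> real) \<Rightarrow> ('x \<Rightarrow> 'z1 \<Rightarrow> real) \<Rightarrow> ('x \<Rightarrow> 'z2 \<Rightarrow> real)
    \<Rightarrow> real \<times> real \<Rightarrow> ereal" where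
  "Rach' PXY d1 d2 D = Inf {ereal (R 0 + R 1 + R 2) | v p R R'.
      ach_feasible PXY d1 d2 (fst D) (snd D) v p R R'}"

definition lower_convex_env :: "(real \<times> real \<Rightarrow> ereal) \<Rightarrow> real \<times> real \<Rightarrow> ereal" where
  "lower_convex_env F D = Inf {(\<Sum>k<(n::nat). ereal (c k) * F (Ds k)) | n c Ds.
      (\<forall>k<n. 0 \<le> c k) \<and> (\<Sum>k<n. c k) = 1 \<and>
      (\<Sum>k<n. c k * fst (Ds k)) = fst D \<and> (\<Sum>k<n. c k * snd (Ds k)) = snd D}"

definition Rach ::
  "('x \<times> 'y1 \<times> 'y2 \<Rightarrow> real) \<Rightarrow> ('x \<Rightarrow> 'z1 \<Rightarrow> real) \<Rightarrow> ('x \<Rightarrow> 'z2 \<Rightarrow> real)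
    \<Rightarrow> real \<times> real \<Rightarrow> ereal" where
  "Rach PXY d1 d2 = lower_convex_env (Rach' PXY d1 d2)"

section \<open>R^T: here (U_0,U_1,U_2) = (U_{1,2}, U_{1}, U_{2})\<close>

definition RT ::
  "('x \<times> 'y1 \<times> 'y2 \<Rightarrow> real) \<Rightarrow> ('x \<Rightarrow> 'z1 \<Rightarrow> real) \<Rightarrow> ('x \<Rightarrow> 'z2 \<Rightarrow> real)
    \<Rightarrow> real \<times> real \<Rightarrow> ereal" where
  "RT PXY d1 d2 D = Inf {ereal (
        max (cond_mutual_info p xc (uc 0) y1c) (cond_mutual_info p xc (uc 0) y2c)
        + cond_mutual_info p xc (uc 1) (\<lambda>w. (uc 0 w, y1c w))
        + cond_mutual_info p xc (uc 2) (\<lambda>w. (uc 0 w, y2c w))) | p.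
      is_dist p \<and> prob p snd = PXY \<and>
      markov p fst xc (\<lambda>w. (y1c w, y2c w)) \<and>
      (\<exists>(g1 :: nat \<Rightarrow> nat \<Rightarrow> 'y1 \<Rightarrow> 'z1) (g2 :: nat \<Rightarrow> nat \<Rightarrow> 'y2 \<Rightarrow> 'z2).
        expect p (\<lambda>w. d1 (xc w) (g1 (uc 0 w) (uc 1 w) (y1c w))) \<le> fst D \<and>
        expect p (\<lambda>w. d2 (xc w) (g2 (uc 0 w) (uc 2 w) (y2c w))) \<le> snd D)}"

end

theory Submission
  imports Defs
begin


lemma prob_nonneg: "(\<And>w. 0 \<le> p w) \<Longrightarrow> 0 \<le> prob p f v"
  unfolding prob_def by (simp add: sum_nonneg)

lemma dist_pos: "is_dist p \<Longrightarrow> w \<in> supp p \<Longrightarrow> 0 < p w"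
  unfolding is_dist_def supp_def by (simp add: order_less_le)

lemma dist_fin: "is_dist p \<Longrightarrow> finite (supp p)"
  unfolding is_dist_def by simp

lemma dist_nn: "is_dist p \<Longrightarrow> 0 \<le> p w"
  unfolding is_dist_def by simp

lemma prob_pos_iff:
  assumes "is_dist p" shows "prob p f v \<noteq> 0 \<longleftrightarrow> v \<in> f ` supp p"
proof
  assume "prob p f v \<noteq> 0"
  then have "{w\<in>supp p. f w = v} \<noteq> {}" unfolding prob_def by force
  then show "v \<in> f ` supp p" by blast
next
  assume "v \<in> f ` supp p"
  then obtain w where w: "w \<in> supp p" "f w = v" by blast
  have "0 < p w" using dist_pos[OF assms w(1)] .
  also have "p w \<le> prob p f v" unfolding prob_def
    by (rule member_le_sum) (use w dist_nn[OF assms] dist_fin[OF assms] in auto)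
  finally show "prob p f v \<noteq> 0" by simp
qed

lemma prob_pos: "is_dist p \<Longrightarrow> w \<in> supp p \<Longrightarrow> 0 < prob p f (f w)"
  using prob_pos_iff[of p f "f w"] prob_nonneg[of p f "f w"] dist_nn[of p]
  by (metis image_eqI less_eq_real_def)

lemma image_prob: "is_dist p \<Longrightarrow> f ` supp p = {v. prob p f v \<noteq> 0}"
  using prob_pos_iff[of p f] by auto

lemma sum_group_prob:
  assumes "finite (supp p)"
  shows "(\<Sum>w\<in>supp p. p w * \<phi> (f w)) = (\<Sum>v\<in>f ` supp p. prob p f v * \<phi> v)"
proof -
  have "(\<Sum>w\<in>supp p. p w * \<phi> (f w)) =
     (\<Sum>v\<in>f ` supp p. \<Sum>w\<in>{w. w \<in> supp p \<and> f w = v}. p w * \<phi> (f w))"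
    by (rule sum.group[symmetric]) (use assms in auto)
  also have "\<dots> = (\<Sum>v\<in>f ` supp p. prob p f v * \<phi> v)"
    unfolding prob_def
  proof (rule sum.cong[OF refl])
    fix v assume "v \<in> f ` supp p"
    have "(\<Sum>w\<in>{w. w \<in> supp p \<and> f w = v}. p w * \<phi> (f w)) = (\<Sum>w\<in>{w. w \<in> supp p \<and> f w = v}. p w * \<phi> v)"
      by (rule sum.cong) auto
    then show "(\<Sum>w\<in>{w. w \<in> supp p \<and> f w = v}. p w * \<phi> (f w)) = (\<Sum>w\<in>{w \<in> supp p. f w = v}. p w) * \<phi> v"
      by (simp add: sum_distrib_right)
  qed
  finally show ?thesis .
qed

lemma entropy_repr:
  assumes "finite (supp p)"
  shows "entropy p f = - (\<Sum>w\<in>supp p. p w * log 2 (prob p f (f w)))"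
  unfolding entropy_def using sum_group_prob[OF assms, of "\<lambda>v. log 2 (prob p f v)" f] by simp

lemma expect_dist:
  assumes "finite (supp p)"
  shows "expect p (\<lambda>w. \<phi> (f w)) = (\<Sum>v\<in>f ` supp p. prob p f v * \<phi> v)"
  unfolding expect_def using sum_group_prob[OF assms] by simp

lemma entropy_eq_dist:
  assumes "is_dist p" "is_dist q" "prob p f = prob q g"
  shows "entropy p f = entropy q g"
  unfolding entropy_def image_prob[OF assms(1)] image_prob[OF assms(2)] assms(3) ..

lemma expect_eq_dist:
  assumes "is_dist p" "is_dist q" "prob p f = prob q g"
  shows "expect p (\<lambda>w. \<phi> (f w)) = expect q (\<lambda>w. \<phi> (g w))"
  unfolding expect_dist[OF dist_fin[OF assms(1)]] expect_dist[OF dist_fin[OF assms(2)]]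
    image_prob[OF assms(1)] image_prob[OF assms(2)] assms(3) ..

lemma prob_push:
  assumes "finite (supp p)"
  shows "prob p (\<lambda>w. \<phi> (f w)) v = (\<Sum>a\<in>{a\<in>f ` supp p. \<phi> a = v}. prob p f a)"
proof -
  have "prob p (\<lambda>w. \<phi> (f w)) v = (\<Sum>w\<in>supp p. p w * (if \<phi> (f w) = v then 1 else 0))"
    unfolding prob_def sum.inter_filter[OF assms] by (rule sum.cong) auto
  also have "\<dots> = (\<Sum>a\<in>f ` supp p. prob p f a * (if \<phi> a = v then 1 else 0))"
    by (rule sum_group_prob[OF assms])
  also have "\<dots> = (\<Sum>a\<in>{a\<in>f ` supp p. \<phi> a = v}. prob p f a)"
    by (subst sum.inter_filter) (use assms in \<open>auto intro!: sum.cong\<close>)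
  finally show ?thesis .
qed

lemma prob_eq_push:
  assumes "is_dist p" "is_dist q" "prob p f = prob q g"
  shows "prob p (\<lambda>w. \<phi> (f w)) = prob q (\<lambda>w. \<phi> (g w))"
proof
  fix v
  show "prob p (\<lambda>w. \<phi> (f w)) v = prob q (\<lambda>w. \<phi> (g w)) v"
    unfolding prob_push[OF dist_fin[OF assms(1)]] prob_push[OF dist_fin[OF assms(2)]]
      image_prob[OF assms(1)] image_prob[OF assms(2)] assms(3) ..
qed

lemma prob_cong:
  assumes "\<And>w. w \<in> supp p \<Longrightarrow> f w = v \<longleftrightarrow> g w = u"
  shows "prob p f v = prob p g u"
  unfolding prob_def using assms by (intro sum.cong) auto

lemma marg:
  assumes "finite (supp p)" "finite C" "g ` supp p \<subseteq> C"
  shows "(\<Sum>c\<in>C. prob p (\<lambda>w. (f w, g w)) (a, c)) = prob p f a"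
proof -
  have "(\<Sum>c\<in>C. prob p (\<lambda>w. (f w, g w)) (a, c)) =
        (\<Sum>c\<in>C. sum p {w. w \<in> {w\<in>supp p. f w = a} \<and> g w = c})"
    unfolding prob_def by (intro sum.cong refl arg_cong[where f="sum p"]) auto
  also have "\<dots> = prob p f a" unfolding prob_def
    by (rule sum.group) (use assms in auto)
  finally show ?thesis .
qed




lemma entropy_cong:
  assumes "is_dist p" "\<And>w w'. w \<in> supp p \<Longrightarrow> w' \<in> supp p \<Longrightarrow> f w = f w' \<longleftrightarrow> g w = g w'"
  shows "entropy p f = entropy p g"
proof -
  have "\<And>w. w \<in> supp p \<Longrightarrow> prob p f (f w) = prob p g (g w)"
    by (rule prob_cong) (use assms(2) in auto)
  then show ?thesis unfolding entropy_repr[OF dist_fin[OF assms(1)]]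
    by (simp cong: sum.cong)
qed

lemma markov_entropy:
  assumes "is_dist p" "markov p f g h"
  shows "entropy p (\<lambda>w. (f w, g w, h w)) + entropy p g =
         entropy p (\<lambda>w. (f w, g w)) + entropy p (\<lambda>w. (g w, h w))"
proof -
  have fin: "finite (supp p)" using dist_fin[OF assms(1)] .
  have "\<And>w. w \<in> supp p \<Longrightarrow> p w * log 2 (prob p (\<lambda>w. (f w, g w, h w)) (f w, g w, h w)) + p w * log 2 (prob p g (g w))
        = p w * log 2 (prob p (\<lambda>w. (f w, g w)) (f w, g w)) + p w * log 2 (prob p (\<lambda>w. (g w, h w)) (g w, h w))"
  proof -
    fix w assume w: "w \<in> supp p"
    have pos: "0 < prob p (\<lambda>w. (f w, g w, h w)) (f w, g w, h w)" "0 < prob p g (g w)"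
      "0 < prob p (\<lambda>w. (f w, g w)) (f w, g w)" "0 < prob p (\<lambda>w. (g w, h w)) (g w, h w)"
      using prob_pos[OF assms(1) w] by auto
    have "log 2 (prob p (\<lambda>w. (f w, g w, h w)) (f w, g w, h w)) + log 2 (prob p g (g w)) =
        log 2 (prob p (\<lambda>w. (f w, g w, h w)) (f w, g w, h w) * prob p g (g w))"
      using pos by (simp add: log_mult_pos)
    also have "\<dots> = log 2 (prob p (\<lambda>w. (f w, g w)) (f w, g w) * prob p (\<lambda>w. (g w, h w)) (g w, h w))"
      using assms(2) unfolding markov_def by metis
    also have "\<dots> = log 2 (prob p (\<lambda>w. (f w, g w)) (f w, g w)) + log 2 (prob p (\<lambda>w. (g w, h w)) (g w, h w))"
      using pos by (simp add: log_mult_pos)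
    finally show "?thesis w" by (simp add: distrib_left[symmetric])
  qed
  then have "(\<Sum>w\<in>supp p. p w * log 2 (prob p (\<lambda>w. (f w, g w, h w)) (f w, g w, h w))) + (\<Sum>w\<in>supp p. p w * log 2 (prob p g (g w)))
     = (\<Sum>w\<in>supp p. p w * log 2 (prob p (\<lambda>w. (f w, g w)) (f w, g w))) + (\<Sum>w\<in>supp p. p w * log 2 (prob p (\<lambda>w. (g w, h w)) (g w, h w)))"
    by (simp add: sum.distrib[symmetric] cong: sum.cong)
  then show ?thesis unfolding entropy_repr[OF fin] by linarith
qed

lemma marg1:
  assumes "finite (supp p)" "finite C" "g ` supp p \<subseteq> C"
  shows "(\<Sum>c\<in>C. prob p (\<lambda>w. (g w, f w)) (c, a)) = prob p f a"
proof -
  have "\<And>c. prob p (\<lambda>w. (g w, f w)) (c, a) = prob p (\<lambda>w. (f w, g w)) (a, c)"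
    by (rule prob_cong) auto
  then show ?thesis using marg[OF assms] by simp
qed

lemma sum_prob_one:
  assumes "is_dist p" shows "(\<Sum>v\<in>f ` supp p. prob p f v) = 1"
  using sum_group_prob[OF dist_fin[OF assms], of "\<lambda>_. 1" f] assms unfolding is_dist_def by simp




lemma prob_nonneg_d: "is_dist p \<Longrightarrow> 0 \<le> prob p f v"
  by (rule prob_nonneg) (rule dist_nn)

lemma cmi_nonneg:
  assumes dp: "is_dist p"
  shows "0 \<le> cond_mutual_info p f g h"
proof -
  define S where "S = supp p"
  have fin: "finite S" using dist_fin[OF dp] S_def by simp
  define F where "F = (\<lambda>w. (f w, (g w, h w)))"
  define Pfh where "Pfh = prob p (\<lambda>w. (f w, h w))"
  define Pgh where "Pgh = prob p (\<lambda>w. (g w, h w))"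
  define Ph where "Ph = prob p h"
  define PF where "PF = prob p F"
  define \<phi> where "\<phi> = (\<lambda>(x,(y,z)). Pfh (x,z) * Pgh (y,z) / (PF (x,(y,z)) * Ph z))"
  define \<psi> where "\<psi> = (\<lambda>(x,(y,z)). Pfh (x,z) * Pgh (y,z) / Ph z)"
  define r where "r = (\<lambda>w. \<phi> (F w))"
  have pos: "0 < Pfh (f w, h w)" "0 < Pgh (g w, h w)" "0 < Ph (h w)" "0 < PF (F w)" if "w \<in> S" for w
    using prob_pos[OF dp, of w] that unfolding S_def Pfh_def Pgh_def Ph_def PF_def by auto
  have nn: "\<And>w. 0 \<le> p w" using dist_nn[OF dp] .
  have cmi: "cond_mutual_info p f g h = (\<Sum>w\<in>S. p w * (- log 2 (r w)))"
  proof -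
    have lg: "\<And>w. w \<in> S \<Longrightarrow> log 2 (r w) = log 2 (Pfh (f w, h w)) + log 2 (Pgh (g w, h w)) - log 2 (PF (F w)) - log 2 (Ph (h w))"
      using pos unfolding r_def \<phi>_def F_def by (simp add: log_mult_pos log_divide_pos)
    have "(\<Sum>w\<in>S. p w * (- log 2 (r w))) =
      (\<Sum>w\<in>S. p w * log 2 (PF (F w)) + p w * log 2 (Ph (h w))
      - p w * log 2 (Pfh (f w, h w)) - p w * log 2 (Pgh (g w, h w)))"
    proof (intro sum.cong refl)
      fix w assume w: "w \<in> S"
      show "p w * (- log 2 (r w)) = p w * log 2 (PF (F w)) + p w * log 2 (Ph (h w))
      - p w * log 2 (Pfh (f w, h w)) - p w * log 2 (Pgh (g w, h w))"
        unfolding lg[OF w] by (simp add: algebra_simps)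
    qed
    also have "\<dots> = (\<Sum>w\<in>S. p w * log 2 (PF (F w))) + (\<Sum>w\<in>S. p w * log 2 (Ph (h w)))
      - (\<Sum>w\<in>S. p w * log 2 (Pfh (f w, h w))) - (\<Sum>w\<in>S. p w * log 2 (Pgh (g w, h w)))"
      by (simp add: sum.distrib sum_subtractf)
    finally have eq: "(\<Sum>w\<in>S. p w * (- log 2 (r w))) = (\<Sum>w\<in>S. p w * log 2 (PF (F w))) + (\<Sum>w\<in>S. p w * log 2 (Ph (h w)))
      - (\<Sum>w\<in>S. p w * log 2 (Pfh (f w, h w))) - (\<Sum>w\<in>S. p w * log 2 (Pgh (g w, h w)))" .
    show ?thesis using eq
      unfolding cond_mutual_info_def cond_entropy_def entropy_repr[OF dist_fin[OF dp]]
      by (simp add: S_def Pfh_def Pgh_def Ph_def PF_def F_def)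
  qed
  have lnle: "p w * (- log 2 (r w)) \<ge> p w * (1 - r w) / ln 2" if "w \<in> S" for w
  proof -
    have "0 < r w" using pos[OF that] unfolding r_def \<phi>_def F_def by simp
    then have "ln (r w) \<le> r w - 1" by (rule ln_le_minus_one)
    then have "log 2 (r w) \<le> (r w - 1) / ln 2" unfolding log_def by (simp add: divide_right_mono)
    then have "- log 2 (r w) \<ge> (1 - r w) / ln 2" by (simp add: field_simps)
    then have "p w * ((1 - r w) / ln 2) \<le> p w * (- log 2 (r w))" using nn[of w] by (rule mult_left_mono)
    then show ?thesis by simp
  qed
  have sr: "(\<Sum>w\<in>S. p w * r w) \<le> 1"
  proof -
    have "(\<Sum>w\<in>S. p w * r w) = (\<Sum>v\<in>F ` S. PF v * \<phi> v)"
      unfolding r_def PF_def S_def by (rule sum_group_prob[OF dist_fin[OF dp]])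
    also have "\<dots> = (\<Sum>v\<in>F ` S. \<psi> v)"
    proof (rule sum.cong[OF refl])
      fix v assume "v \<in> F ` S"
      then obtain w where "w \<in> S" "v = F w" by blast
      then have "PF v \<noteq> 0" using pos by fastforce
      then show "PF v * \<phi> v = \<psi> v" unfolding \<phi>_def \<psi>_def by (auto split: prod.splits)
    qed
    also have "\<dots> \<le> (\<Sum>v\<in>f ` S \<times> (g ` S \<times> h ` S). \<psi> v)"
    proof (rule sum_mono2)
      show "finite (f ` S \<times> (g ` S \<times> h ` S))" using fin by simp
      show "F ` S \<subseteq> f ` S \<times> (g ` S \<times> h ` S)" unfolding F_def by auto
      show "\<And>b. b \<in> f ` S \<times> g ` S \<times> h ` S - F ` S \<Longrightarrow> 0 \<le> \<psi> b"
        unfolding \<psi>_def Pfh_def Pgh_def Ph_def by (auto intro!: divide_nonneg_nonneg mult_nonneg_nonneg prob_nonneg_d[OF dp])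
    qed
    also have "\<dots> = (\<Sum>x\<in>f ` S. \<Sum>y\<in>g ` S. \<Sum>z\<in>h ` S. \<psi> (x,(y,z)))"
      by (simp add: sum.cartesian_product)
    also have "\<dots> = (\<Sum>z\<in>h ` S. \<Sum>x\<in>f ` S. \<Sum>y\<in>g ` S. \<psi> (x,(y,z)))"
      by (simp add: sum.swap[of _ "h ` S"] sum.swap[of _ "h ` S" "g ` S"])
    also have "\<dots> = (\<Sum>z\<in>h ` S. (\<Sum>x\<in>f ` S. Pfh (x,z)) * (\<Sum>y\<in>g ` S. Pgh (y,z)) / Ph z)"
      unfolding \<psi>_def by (simp add: sum_product sum_divide_distrib)
    also have "\<dots> = (\<Sum>z\<in>h ` S. Ph z * Ph z / Ph z)"
    proof -
      have m1: "\<And>z. (\<Sum>x\<in>f ` S. Pfh (x,z)) = Ph z" unfolding Pfh_def Ph_def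
        by (rule marg1[OF dist_fin[OF dp] finite_imageI[OF fin]]) (simp add: S_def)
      have m2: "\<And>z. (\<Sum>y\<in>g ` S. Pgh (y,z)) = Ph z" unfolding Pgh_def Ph_def
        by (rule marg1[OF dist_fin[OF dp] finite_imageI[OF fin]]) (simp add: S_def)
      show ?thesis by (simp add: m1 m2)
    qed
    also have "\<dots> = (\<Sum>z\<in>h ` S. Ph z)"
    proof (rule sum.cong[OF refl])
      fix z assume "z \<in> h ` S"
      then have "Ph z \<noteq> 0" using pos by fastforce
      then show "Ph z * Ph z / Ph z = Ph z" by simp
    qed
    also have "\<dots> = 1" unfolding Ph_def S_def by (rule sum_prob_one[OF dp])
    finally show ?thesis .
  qed
  have "(\<Sum>w\<in>S. p w * (1 - r w) / ln 2) = (1 - (\<Sum>w\<in>S. p w * r w)) / ln 2"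
  proof -
    have "(\<Sum>w\<in>S. p w) = 1" using dp unfolding is_dist_def S_def by simp
    then show ?thesis
      by (simp add: sum_divide_distrib[symmetric] right_diff_distrib sum_subtractf)
  qed
  also have "\<dots> \<ge> 0" using sr by simp
  finally have "0 \<le> (\<Sum>w\<in>S. p w * (1 - r w) / ln 2)" .
  also have "\<dots> \<le> (\<Sum>w\<in>S. p w * (- log 2 (r w)))" by (rule sum_mono) (rule lnle)
  finally show ?thesis using cmi by simp
qed




lemma prob_zero_out: "a \<notin> G ` supp p \<Longrightarrow> prob p G a = 0"
  unfolding prob_def by (rule sum.neutral) auto

lemma prob_sup:
  assumes "finite (supp p)" "finite T" "G ` supp p \<subseteq> T"
  shows "prob p (\<lambda>w. \<Phi> (G w)) v = (\<Sum>t\<in>T. if \<Phi> t = v then prob p G t else 0)"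
proof -
  have "prob p (\<lambda>w. \<Phi> (G w)) v = (\<Sum>t\<in>G ` supp p. if \<Phi> t = v then prob p G t else 0)"
    unfolding prob_push[OF assms(1)] by (simp add: sum.inter_filter assms(1))
  also have "\<dots> = (\<Sum>t\<in>T. if \<Phi> t = v then prob p G t else 0)"
    by (rule sum.mono_neutral_left) (use assms prob_zero_out in auto)
  finally show ?thesis .
qed

lemma markov_marg:
  assumes dp: "is_dist p" and mk: "markov p f g h"
  shows "markov p (\<lambda>w. \<phi> (f w)) g (\<lambda>w. \<psi> (h w))"
  unfolding markov_def
proof (intro allI)
  fix a b c
  define S where "S = supp p"
  have fin: "finite S" using dist_fin[OF dp] S_def by simp
  define A where "A = f ` S" define B where "B = g ` S" define C where "C = h ` S"
  have fA: "finite A" "finite B" "finite C" using fin A_def B_def C_def by auto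
  define P3 where "P3 = prob p (\<lambda>w. (f w, g w, h w))"
  define P2 where "P2 = prob p (\<lambda>w. (f w, g w))"
  define Q2 where "Q2 = prob p (\<lambda>w. (g w, h w))"
  define Pg where "Pg = prob p g"
  have e3: "prob p (\<lambda>w. (\<phi> (f w), g w, \<psi> (h w))) (a, b, c) =
     (\<Sum>x\<in>A. \<Sum>y\<in>B. \<Sum>z\<in>C. if \<phi> x = a \<and> y = b \<and> \<psi> z = c then P3 (x,y,z) else 0)"
  proof -
    have "prob p (\<lambda>w. (\<lambda>(x,y,z). (\<phi> x, y, \<psi> z)) (f w, g w, h w)) (a, b, c) =
       (\<Sum>t\<in>A \<times> B \<times> C. if (\<lambda>(x,y,z). (\<phi> x, y, \<psi> z)) t = (a,b,c) then P3 t else 0)"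
      unfolding P3_def by (rule prob_sup) (use fin fA in \<open>auto simp: A_def B_def C_def S_def\<close>)
    then show ?thesis by (simp add: sum.cartesian_product) (auto intro!: sum.cong split: prod.splits)
  qed
  have e2: "prob p (\<lambda>w. (\<phi> (f w), g w)) (a, b) =
     (\<Sum>x\<in>A. \<Sum>y\<in>B. if \<phi> x = a \<and> y = b then P2 (x,y) else 0)"
  proof -
    have "prob p (\<lambda>w. (\<lambda>(x,y). (\<phi> x, y)) (f w, g w)) (a, b) =
       (\<Sum>t\<in>A \<times> B. if (\<lambda>(x,y). (\<phi> x, y)) t = (a,b) then P2 t else 0)"
      unfolding P2_def by (rule prob_sup) (use fin fA in \<open>auto simp: A_def B_def C_def S_def\<close>)
    then show ?thesis by (simp add: sum.cartesian_product) (auto intro!: sum.cong split: prod.splits)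
  qed
  have e2': "prob p (\<lambda>w. (g w, \<psi> (h w))) (b, c) =
     (\<Sum>y\<in>B. \<Sum>z\<in>C. if y = b \<and> \<psi> z = c then Q2 (y,z) else 0)"
  proof -
    have "prob p (\<lambda>w. (\<lambda>(y,z). (y, \<psi> z)) (g w, h w)) (b, c) =
       (\<Sum>t\<in>B \<times> C. if (\<lambda>(y,z). (y, \<psi> z)) t = (b,c) then Q2 t else 0)"
      unfolding Q2_def by (rule prob_sup) (use fin fA in \<open>auto simp: A_def B_def C_def S_def\<close>)
    then show ?thesis by (simp add: sum.cartesian_product) (auto intro!: sum.cong split: prod.splits)
  qed
  show "prob p (\<lambda>w. (\<phi> (f w), g w, \<psi> (h w))) (a, b, c) * prob p g b =
        prob p (\<lambda>w. (\<phi> (f w), g w)) (a, b) * prob p (\<lambda>w. (g w, \<psi> (h w))) (b, c)"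
  proof (cases "b \<in> B")
    case False
    then have "prob p g b = 0" using prob_zero_out[of b g p] B_def S_def by simp
    moreover have "prob p (\<lambda>w. (g w, \<psi> (h w))) (b, c) = 0" unfolding e2' using False
      by (intro sum.neutral ballI) auto
    ultimately show ?thesis by simp
  next
    case True
    have c3: "(\<Sum>y\<in>B. if \<phi> x = a \<and> y = b \<and> \<psi> z = c then F y else 0) = (if \<phi> x = a \<and> \<psi> z = c then F b else 0)"
      for x z and F :: "_ \<Rightarrow> real"
      using True fA by (cases "\<phi> x = a"; cases "\<psi> z = c") simp_all
    have mk': "P3 (x,b,z) * Pg b = P2 (x,b) * Q2 (b,z)" for x z
      using mk unfolding markov_def P3_def Pg_def P2_def Q2_def by blast
    have s3: "prob p (\<lambda>w. (\<phi> (f w), g w, \<psi> (h w))) (a, b, c) =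
      (\<Sum>x\<in>A. \<Sum>z\<in>C. if \<phi> x = a \<and> \<psi> z = c then P3 (x,b,z) else 0)"
      unfolding e3 proof (intro sum.cong refl)
      fix x
      show "(\<Sum>y\<in>B. \<Sum>z\<in>C. if \<phi> x = a \<and> y = b \<and> \<psi> z = c then P3 (x, y, z) else 0) =
            (\<Sum>z\<in>C. if \<phi> x = a \<and> \<psi> z = c then P3 (x, b, z) else 0)"
        by (subst sum.swap) (simp add: c3)
    qed
    have s2: "prob p (\<lambda>w. (\<phi> (f w), g w)) (a, b) = (\<Sum>x\<in>A. if \<phi> x = a then P2 (x,b) else 0)"
      unfolding e2 proof (intro sum.cong refl)
      fix x show "(\<Sum>y\<in>B. if \<phi> x = a \<and> y = b then P2 (x, y) else 0) = (if \<phi> x = a then P2 (x, b) else 0)"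
        using True fA by (cases "\<phi> x = a") simp_all
    qed
    have s2': "prob p (\<lambda>w. (g w, \<psi> (h w))) (b, c) = (\<Sum>z\<in>C. if \<psi> z = c then Q2 (b,z) else 0)"
      unfolding e2' proof -
      have "(\<Sum>y\<in>B. \<Sum>z\<in>C. if y = b \<and> \<psi> z = c then Q2 (y, z) else 0) = (\<Sum>y\<in>B. if y = b then (\<Sum>z\<in>C. if \<psi> z = c then Q2 (y, z) else 0) else 0)"
        by (intro sum.cong refl) auto
      then show "(\<Sum>y\<in>B. \<Sum>z\<in>C. if y = b \<and> \<psi> z = c then Q2 (y, z) else 0) = (\<Sum>z\<in>C. if \<psi> z = c then Q2 (b, z) else 0)"
        using True fA by simp
    qed
    have "prob p (\<lambda>w. (\<phi> (f w), g w, \<psi> (h w))) (a, b, c) * Pg b =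
      (\<Sum>x\<in>A. \<Sum>z\<in>C. if \<phi> x = a \<and> \<psi> z = c then P2 (x,b) * Q2 (b,z) else 0)"
      unfolding s3 sum_distrib_right by (intro sum.cong refl) (simp add: mk'[symmetric])
    also have "\<dots> = (\<Sum>x\<in>A. if \<phi> x = a then P2 (x,b) else 0) * (\<Sum>z\<in>C. if \<psi> z = c then Q2 (b,z) else 0)"
      unfolding sum_product by (intro sum.cong refl) auto
    finally show ?thesis unfolding s2 s2' Pg_def .
  qed
qed



lemma prob_T:
  assumes "finite T" "supp q \<subseteq> T"
  shows "prob q G v = (\<Sum>w\<in>T. if G w = v then q w else 0)"
proof -
  have "prob q G v = (\<Sum>w\<in>supp q. if G w = v then q w else 0)"
    unfolding prob_def by (subst sum.inter_filter) (use assms finite_subset in auto)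
  also have "\<dots> = (\<Sum>w\<in>T. if G w = v then q w else 0)"
    by (rule sum.mono_neutral_left) (use assms in \<open>auto simp: supp_def\<close>)
  finally show ?thesis .
qed

lemma prob_pair_nz: "is_dist p \<Longrightarrow> prob p (\<lambda>w. (f w, g w)) (a, b) \<noteq> 0 \<Longrightarrow> prob p g b \<noteq> 0"
  unfolding prob_pos_iff by auto

lemma prob_pair_nz1: "is_dist p \<Longrightarrow> prob p (\<lambda>w. (f w, g w)) (a, b) \<noteq> 0 \<Longrightarrow> prob p f a \<noteq> 0"
  unfolding prob_pos_iff by auto

lemma sum_UNIV_fst:
  fixes F :: "'a::finite \<times> 'b::finite \<Rightarrow> real"
  shows "(\<Sum>s\<in>UNIV. if fst s = x then F s else 0) = (\<Sum>y\<in>UNIV. F (x, y))"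
proof -
  have "(\<Sum>s\<in>UNIV. if fst s = x then F s else 0) = (\<Sum>s\<in>UNIV \<times> UNIV. if fst s = x then F s else 0)"
    by simp
  also have "\<dots> = (\<Sum>x'\<in>UNIV. \<Sum>y\<in>UNIV. if x' = x then F (x', y) else 0)"
    by (simp add: sum.cartesian_product) (intro sum.cong refl, auto split: prod.splits)
  also have "\<dots> = (\<Sum>y\<in>UNIV. F (x, y))"
    by (simp add: sum.swap[of _ UNIV UNIV] if_distrib cong: if_cong)
  finally show ?thesis .
qed




lemma prob_mid_nz: "is_dist r \<Longrightarrow> prob r (\<lambda>w. (f w, g w, h w)) (a, b, c) \<noteq> 0 \<Longrightarrow> prob r g b \<noteq> 0"
  unfolding prob_pos_iff by auto

lemma mk_sub1:
  assumes "is_dist r" "markov r fst xc (\<lambda>w. (y1c w, y2c w))"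
  shows "markov r (\<lambda>w. (uc 0 w, uc 1 w)) xc y1c"
proof -
  have eq: "(\<lambda>w. (uc 0 w, uc 1 w)) = (\<lambda>w. (\<lambda>u. (fst u, fst (snd u))) (fst w))"
    by (auto simp: uc_def split: prod.splits)
  have eq2: "y1c = (\<lambda>w. fst ((\<lambda>w. (y1c w, y2c w)) w))" by simp
  show ?thesis unfolding eq by (subst eq2) (rule markov_marg[OF assms])
qed

lemma mk_sub2:
  assumes "is_dist r" "markov r fst xc (\<lambda>w. (y1c w, y2c w))"
  shows "markov r (\<lambda>w. (uc 0 w, uc 2 w)) xc y2c"
proof -
  have eq: "(\<lambda>w. (uc 0 w, uc 2 w)) = (\<lambda>w. (\<lambda>u. (fst u, snd (snd u))) (fst w))"
    by (auto simp: uc_def split: prod.splits)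
  have eq2: "y2c = (\<lambda>w. snd ((\<lambda>w. (y1c w, y2c w)) w))" by simp
  show ?thesis unfolding eq by (subst eq2) (rule markov_marg[OF assms])
qed

lemma mk_sub0:
  assumes "is_dist r" "markov r fst xc (\<lambda>w. (y1c w, y2c w))"
  shows "markov r (uc 0) xc y1c" "markov r (uc 0) xc y2c"
proof -
  have eq: "uc 0 = (\<lambda>w. (\<lambda>u. fst u) (fst w))"
    by (auto simp: uc_def split: prod.splits)
  have eq2: "y1c = (\<lambda>w. fst ((\<lambda>w. (y1c w, y2c w)) w))" by simp
  have eq3: "y2c = (\<lambda>w. snd ((\<lambda>w. (y1c w, y2c w)) w))" by simp
  show "markov r (uc 0) xc y1c" unfolding eq by (subst eq2) (rule markov_marg[OF assms])
  show "markov r (uc 0) xc y2c" unfolding eq by (subst eq3) (rule markov_marg[OF assms])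
qed

locale constr =
  fixes p :: "(nat \<times> nat \<times> nat) \<times> 'x::finite \<times> 'y1::finite \<times> 'y2::finite \<Rightarrow> real"
  assumes dp: "is_dist p"
begin

definition "Q1 = prob p (\<lambda>w. (uc 0 w, uc 1 w, xc w))"
definition "Q2 = prob p (\<lambda>w. (uc 0 w, uc 2 w, xc w))"
definition "Q0 = prob p (\<lambda>w. (uc 0 w, xc w))"
definition "PX = prob p xc"
definition "PS = prob p snd"
definition "A0 = uc 0 ` supp p"
definition "A1 = uc 1 ` supp p"
definition "A2 = uc 2 ` supp p"
definition "K = (\<lambda>((a,b,c),x). Q1 (a,b,x) * Q2 (a,c,x) / Q0 (a,x))"
definition "q = (\<lambda>w. K (fst w, xc w) * PS (snd w) / PX (xc w))"

lemma finA: "finite A0" "finite A1" "finite A2"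
  using dist_fin[OF dp] unfolding A0_def A1_def A2_def by auto

lemma nn: "0 \<le> Q1 v" "0 \<le> Q2 v" "0 \<le> Q0 v'" "0 \<le> PX x" "0 \<le> PS s"
  unfolding Q1_def Q2_def Q0_def PX_def PS_def by (auto intro: prob_nonneg_d[OF dp])

lemma h1: "(\<Sum>b\<in>A1. Q1 (a,b,x)) = Q0 (a,x)"
proof -
  have eq: "\<And>b. Q1 (a,b,x) = prob p (\<lambda>w. ((uc 0 w, xc w), uc 1 w)) ((a,x),b)"
    unfolding Q1_def by (rule prob_cong) auto
  have "(\<Sum>b\<in>A1. prob p (\<lambda>w. ((uc 0 w, xc w), uc 1 w)) ((a,x),b)) = prob p (\<lambda>w. (uc 0 w, xc w)) (a,x)"
    by (rule marg[OF dist_fin[OF dp] finA(2)]) (simp add: A1_def)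
  then show ?thesis unfolding eq Q0_def .
qed

lemma h2: "(\<Sum>c\<in>A2. Q2 (a,c,x)) = Q0 (a,x)"
proof -
  have eq: "\<And>c. Q2 (a,c,x) = prob p (\<lambda>w. ((uc 0 w, xc w), uc 2 w)) ((a,x),c)"
    unfolding Q2_def by (rule prob_cong) auto
  have "(\<Sum>c\<in>A2. prob p (\<lambda>w. ((uc 0 w, xc w), uc 2 w)) ((a,x),c)) = prob p (\<lambda>w. (uc 0 w, xc w)) (a,x)"
    by (rule marg[OF dist_fin[OF dp] finA(3)]) (simp add: A2_def)
  then show ?thesis unfolding eq Q0_def .
qed

lemma h3: "(\<Sum>a\<in>A0. Q0 (a,x)) = PX x"
  unfolding Q0_def PX_def by (rule marg1[OF dist_fin[OF dp] finA(1)]) (simp add: A0_def)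

lemma h4: "(\<Sum>y\<in>UNIV. PS (x,y)) = PX x"
proof -
  have eq: "\<And>y. PS (x,y) = prob p (\<lambda>w. (xc w, snd (snd w))) (x,y)"
    unfolding PS_def by (rule prob_cong) (auto simp: xc_def)
  have "(\<Sum>y\<in>UNIV. prob p (\<lambda>w. (xc w, snd (snd w))) (x,y)) = prob p xc x"
    by (rule marg[OF dist_fin[OF dp]]) simp_all
  then show ?thesis unfolding eq PX_def .
qed

lemma h5: "(\<Sum>x\<in>UNIV. PX x) = 1"
proof -
  have "(\<Sum>x\<in>UNIV. PX x) = (\<Sum>x\<in>xc ` supp p. PX x)"
    by (rule sum.mono_neutral_right) (auto simp: PX_def prob_zero_out)
  also have "\<dots> = 1" unfolding PX_def by (rule sum_prob_one[OF dp])
  finally show ?thesis .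
qed

lemma nz1: "Q1 (a,b,x) \<noteq> 0 \<Longrightarrow> Q0 (a,x) \<noteq> 0 \<and> a \<in> A0 \<and> b \<in> A1"
proof -
  assume "Q1 (a,b,x) \<noteq> 0"
  then have "(a,b,x) \<in> (\<lambda>w. (uc 0 w, uc 1 w, xc w)) ` supp p" using prob_pos_iff[OF dp, of "\<lambda>w. (uc 0 w, uc 1 w, xc w)" "(a,b,x)"] Q1_def by simp
  then have "(a,x) \<in> (\<lambda>w. (uc 0 w, xc w)) ` supp p" "a \<in> A0" "b \<in> A1" unfolding A0_def A1_def by force+
  then show ?thesis using prob_pos_iff[OF dp, of "\<lambda>w. (uc 0 w, xc w)" "(a,x)"] Q0_def by simp
qed

lemma nz2: "Q2 (a,c,x) \<noteq> 0 \<Longrightarrow> Q0 (a,x) \<noteq> 0 \<and> a \<in> A0 \<and> c \<in> A2"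
proof -
  assume "Q2 (a,c,x) \<noteq> 0"
  then have "(a,c,x) \<in> (\<lambda>w. (uc 0 w, uc 2 w, xc w)) ` supp p" using prob_pos_iff[OF dp, of "\<lambda>w. (uc 0 w, uc 2 w, xc w)" "(a,c,x)"] Q2_def by simp
  then have "(a,x) \<in> (\<lambda>w. (uc 0 w, xc w)) ` supp p" "a \<in> A0" "c \<in> A2" unfolding A0_def A2_def by force+
  then show ?thesis using prob_pos_iff[OF dp, of "\<lambda>w. (uc 0 w, xc w)" "(a,x)"] Q0_def by simp
qed

lemma nz0: "Q0 (a,x) \<noteq> 0 \<Longrightarrow> PX x \<noteq> 0"
  unfolding Q0_def PX_def by (rule prob_pair_nz[OF dp])

lemma nzS: "PS (x,y) \<noteq> 0 \<Longrightarrow> PX x \<noteq> 0"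
proof -
  assume "PS (x,y) \<noteq> 0"
  then have "(x,y) \<in> snd ` supp p" using prob_pos_iff[OF dp, of snd "(x,y)"] PS_def by simp
  then have "x \<in> xc ` supp p" unfolding xc_def by force
  then show ?thesis using prob_pos_iff[OF dp, of xc x] PX_def by simp
qed

definition "U = A0 \<times> A1 \<times> A2"

lemma finU: "finite U" using finA U_def by simp

lemma Kc: "(\<Sum>c\<in>A2. K ((a,b,c),x)) = Q1 (a,b,x)"
proof (cases "Q0 (a,x) = 0")
  case True
  then have "Q1 (a,b,x) = 0" using nz1 by blast
  then show ?thesis by (simp add: K_def)
next
  case False
  have "(\<Sum>c\<in>A2. K ((a,b,c),x)) = Q1 (a,b,x) * (\<Sum>c\<in>A2. Q2 (a,c,x)) / Q0 (a,x)"
    by (simp add: K_def sum_distrib_left sum_divide_distrib)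
  then show ?thesis using False by (simp add: h2)
qed

lemma Kb: "(\<Sum>b\<in>A1. K ((a,b,c),x)) = Q2 (a,c,x)"
proof (cases "Q0 (a,x) = 0")
  case True
  then have "Q2 (a,c,x) = 0" using nz2 by blast
  then show ?thesis by (simp add: K_def)
next
  case False
  have "(\<Sum>b\<in>A1. K ((a,b,c),x)) = (\<Sum>b\<in>A1. Q1 (a,b,x)) * Q2 (a,c,x) / Q0 (a,x)"
    by (simp add: K_def sum_distrib_right sum_divide_distrib)
  then show ?thesis using False by (simp add: h1)
qed

lemma Ksum: "(\<Sum>u\<in>U. K (u,x)) = PX x"
proof -
  have "(\<Sum>u\<in>U. K (u,x)) = (\<Sum>a\<in>A0. \<Sum>b\<in>A1. \<Sum>c\<in>A2. K ((a,b,c),x))"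
    unfolding U_def by (simp add: sum.cartesian_product)
  also have "\<dots> = PX x" by (simp add: Kc h1 h3)
  finally show ?thesis .
qed

lemma Knn: "0 \<le> K v"
  unfolding K_def using nn by (auto split: prod.splits intro!: divide_nonneg_nonneg mult_nonneg_nonneg)

lemma Knz: "K ((a,b,c),x) \<noteq> 0 \<Longrightarrow> Q0 (a,x) \<noteq> 0 \<and> PX x \<noteq> 0 \<and> (a,b,c) \<in> U"
  using nz1[of a b x] nz2[of a c x] nz0[of a x] unfolding K_def U_def by auto

lemma qnn: "0 \<le> q w"
  unfolding q_def using Knn nn by (auto intro!: divide_nonneg_nonneg mult_nonneg_nonneg)

lemma supp_q: "supp q \<subseteq> U \<times> UNIV"
proof
  fix w assume "w \<in> supp q"
  then have "K (fst w, xc w) \<noteq> 0" unfolding supp_def q_def by auto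
  then show "w \<in> U \<times> UNIV" using Knz by (cases w) auto
qed

lemma fin_q: "finite (supp q)"
  using supp_q finU by (meson finite_SigmaI finite_UNIV finite_subset)

lemma prob_point: "inj f \<Longrightarrow> prob r f (f w0) = r w0"
proof -
  assume "inj f"
  then have eq: "{w\<in>supp r. f w = f w0} = supp r \<inter> {w0}" by (auto dest: injD)
  show ?thesis unfolding prob_def eq by (cases "w0 \<in> supp r") (auto simp: supp_def)
qed

lemma q_ux: "prob q (\<lambda>w. (fst w, xc w)) (u, x) = K (u, x)"
proof -
  have "prob q (\<lambda>w. (fst w, xc w)) (u, x) = (\<Sum>y\<in>UNIV. prob q (\<lambda>w. ((fst w, xc w), (y1c w, y2c w))) ((u,x), y))"
    by (rule marg[OF fin_q, symmetric]) simp_all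
  also have "\<dots> = (\<Sum>y\<in>UNIV. q (u, x, y))"
  proof (rule sum.cong[OF refl])
    fix y :: "'y1 \<times> 'y2"
    have inj: "inj (\<lambda>w :: (nat \<times> nat \<times> nat) \<times> 'x \<times> 'y1 \<times> 'y2. ((fst w, xc w), (y1c w, y2c w)))"
      by (auto intro!: injI simp: xc_def y1c_def y2c_def prod_eq_iff)
    show "prob q (\<lambda>w. ((fst w, xc w), (y1c w, y2c w))) ((u,x), y) = q (u, x, y)"
      using prob_point[OF inj, of q "(u,x,y)"] by (simp add: xc_def y1c_def y2c_def)
  qed
  also have "\<dots> = K (u,x) * (\<Sum>y\<in>UNIV. PS (x,y)) / PX x"
    by (simp add: q_def xc_def sum_distrib_left sum_divide_distrib)
  also have "\<dots> = K (u,x)"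
  proof (cases "K (u,x) = 0")
    case False
    then have "PX x \<noteq> 0" using Knz by (cases u) auto
    then show ?thesis by (simp add: h4)
  qed simp
  finally show ?thesis .
qed

lemma dq: "is_dist q"
proof -
  have "(\<Sum>w\<in>supp q. q w) = (\<Sum>w\<in>supp q. q w * (\<lambda>_. 1) ((\<lambda>w. (fst w, xc w)) w))" by simp
  also have "\<dots> = (\<Sum>v\<in>(\<lambda>w. (fst w, xc w)) ` supp q. prob q (\<lambda>w. (fst w, xc w)) v * 1)"
    by (rule sum_group_prob[OF fin_q])
  also have "\<dots> = (\<Sum>v\<in>(\<lambda>w. (fst w, xc w)) ` supp q. prob q (\<lambda>w. (fst w, xc w)) v)" by simp
  also have "\<dots> = (\<Sum>v\<in>U \<times> UNIV. prob q (\<lambda>w. (fst w, xc w)) v)"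
    by (rule sum.mono_neutral_left) (use finU supp_q prob_zero_out in \<open>auto simp: xc_def\<close>)
  also have "\<dots> = (\<Sum>u\<in>U. \<Sum>x\<in>UNIV. K (u,x))"
    by (simp add: sum.cartesian_product) (intro sum.cong refl, auto simp: q_ux)
  also have "\<dots> = (\<Sum>x\<in>UNIV. PX x)" by (subst sum.swap) (simp add: Ksum)
  also have "\<dots> = 1" by (rule h5)
  finally show ?thesis unfolding is_dist_def using fin_q qnn by simp
qed

lemma ucs: "uc 0 w = fst (fst w)" "uc 1 w = fst (snd (fst w))" "uc 2 w = snd (snd (fst w))"
  by (simp_all add: uc_def split: prod.splits)

lemma uc1s: "uc (Suc 0) w = fst (snd (fst w))"
  by (simp add: uc_def split: prod.splits)

lemma fstU: "fst ` supp q \<subseteq> U" using supp_q by auto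

lemma q_X: "prob q xc x = PX x"
proof -
  have "(\<Sum>u\<in>U. prob q (\<lambda>w. (fst w, xc w)) (u, x)) = prob q xc x"
    by (rule marg1[OF fin_q finU fstU])
  then show ?thesis by (simp add: q_ux Ksum)
qed

lemma q_S: "prob q snd s = PS s"
proof -
  obtain x y where s: "s = (x,y)" by (cases s)
  have "(\<Sum>u\<in>U. prob q (\<lambda>w. (fst w, snd w)) (u, s)) = prob q snd s"
    by (rule marg1[OF fin_q finU fstU])
  moreover have "prob q (\<lambda>w. (fst w, snd w)) (u, s) = q (u, s)" for u
    using prob_point[of "\<lambda>w. (fst w, snd w)" q "(u,s)"] by (simp add: inj_on_def)
  ultimately have "prob q snd s = (\<Sum>u\<in>U. K (u,x)) * PS (x,y) / PX x"
    by (simp add: q_def s xc_def sum_distrib_right sum_divide_distrib)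
  also have "\<dots> = PS s"
    unfolding Ksum s using nzS[of x y] by (cases "PS (x,y) = 0") auto
  finally show ?thesis .
qed

lemma q_mk: "markov q fst xc (\<lambda>w. (y1c w, y2c w))"
  unfolding markov_def
proof (intro allI)
  fix u x y
  have inj: "inj (\<lambda>w :: (nat \<times> nat \<times> nat) \<times> 'x \<times> 'y1 \<times> 'y2. (fst w, xc w, (y1c w, y2c w)))"
    by (auto intro!: injI simp: xc_def y1c_def y2c_def prod_eq_iff)
  have e1: "prob q (\<lambda>w. (fst w, xc w, y1c w, y2c w)) (u, x, y) = q (u, x, y)"
    using prob_point[OF inj, of q "(u,x,y)"] by (simp add: xc_def y1c_def y2c_def)
  have e2: "prob q (\<lambda>w. (xc w, y1c w, y2c w)) (x, y) = PS (x, y)"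
    unfolding q_S[symmetric] by (rule prob_cong) (auto simp: xc_def y1c_def y2c_def)
  show "prob q (\<lambda>w. (fst w, xc w, y1c w, y2c w)) (u, x, y) * prob q xc x =
        prob q (\<lambda>w. (fst w, xc w)) (u, x) * prob q (\<lambda>w. (xc w, y1c w, y2c w)) (x, y)"
    unfolding e1 e2 q_X q_ux
  proof (cases "K (u,x) = 0")
    case False
    then have "PX x \<noteq> 0" using Knz by (cases u) auto
    then show "q (u, x, y) * PX x = K (u, x) * PS (x, y)" by (simp add: q_def xc_def)
  qed (simp add: q_def xc_def)
qed

lemma u2U: "uc 2 ` supp q \<subseteq> A2" "uc 1 ` supp q \<subseteq> A1"
  using supp_q unfolding U_def by (auto simp: ucs uc1s)

lemma q_Q1: "prob q (\<lambda>w. (uc 0 w, uc 1 w, xc w)) v = Q1 v"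
proof -
  obtain a b x where v: "v = (a,b,x)" by (cases v)
  have "(\<Sum>c\<in>A2. prob q (\<lambda>w. ((uc 0 w, uc 1 w, xc w), uc 2 w)) ((a,b,x), c)) = prob q (\<lambda>w. (uc 0 w, uc 1 w, xc w)) (a,b,x)"
    by (rule marg[OF fin_q finA(3) u2U(1)])
  moreover have "prob q (\<lambda>w. ((uc 0 w, uc 1 w, xc w), uc 2 w)) ((a,b,x), c) = K ((a,b,c),x)" for c
    unfolding q_ux[symmetric] by (rule prob_cong) (auto simp: ucs uc1s xc_def prod_eq_iff)
  ultimately show ?thesis using Kc v by simp
qed

lemma q_Q2: "prob q (\<lambda>w. (uc 0 w, uc 2 w, xc w)) v = Q2 v"
proof -
  obtain a c x where v: "v = (a,c,x)" by (cases v)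
  have "(\<Sum>b\<in>A1. prob q (\<lambda>w. ((uc 0 w, uc 2 w, xc w), uc 1 w)) ((a,c,x), b)) = prob q (\<lambda>w. (uc 0 w, uc 2 w, xc w)) (a,c,x)"
    by (rule marg[OF fin_q finA(2) u2U(2)])
  moreover have "prob q (\<lambda>w. ((uc 0 w, uc 2 w, xc w), uc 1 w)) ((a,c,x), b) = K ((a,b,c),x)" for b
    unfolding q_ux[symmetric] by (rule prob_cong) (auto simp: ucs uc1s xc_def prod_eq_iff)
  ultimately show ?thesis using Kb v by simp
qed

lemma q_Q0: "prob q (\<lambda>w. (uc 0 w, xc w)) v = Q0 v"
proof -
  obtain a x where v: "v = (a,x)" by (cases v)
  have "(\<Sum>b\<in>A1. prob q (\<lambda>w. ((uc 0 w, xc w), uc 1 w)) ((a,x), b)) = prob q (\<lambda>w. (uc 0 w, xc w)) (a,x)"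
    by (rule marg[OF fin_q finA(2) u2U(2)])
  moreover have "prob q (\<lambda>w. ((uc 0 w, xc w), uc 1 w)) ((a,x), b) = Q1 (a,b,x)" for b
    unfolding q_Q1[symmetric] by (rule prob_cong) auto
  ultimately show ?thesis using h1 v by simp
qed

lemma q_CI: "markov q (uc 1) (\<lambda>w. (uc 0 w, xc w)) (uc 2)"
  unfolding markov_def
proof (intro allI)
  fix b c :: nat and v :: "nat \<times> 'x"
  obtain a x where v: "v = (a,x)" by (cases v)
  have e3: "prob q (\<lambda>w. (uc 1 w, (uc 0 w, xc w), uc 2 w)) (b, v, c) = K ((a,b,c),x)"
    unfolding q_ux[symmetric] v by (rule prob_cong) (auto simp: ucs uc1s xc_def prod_eq_iff)
  have e1: "prob q (\<lambda>w. (uc 1 w, (uc 0 w, xc w))) (b, v) = Q1 (a,b,x)"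
    unfolding q_Q1[symmetric] v by (rule prob_cong) auto
  have e2: "prob q (\<lambda>w. ((uc 0 w, xc w), uc 2 w)) (v, c) = Q2 (a,c,x)"
    unfolding q_Q2[symmetric] v by (rule prob_cong) auto
  show "prob q (\<lambda>w. (uc 1 w, (uc 0 w, xc w), uc 2 w)) (b, v, c) * prob q (\<lambda>w. (uc 0 w, xc w)) v =
        prob q (\<lambda>w. (uc 1 w, (uc 0 w, xc w))) (b, v) * prob q (\<lambda>w. ((uc 0 w, xc w), uc 2 w)) (v, c)"
  proof -
    have "K ((a, b, c), x) * Q0 (a, x) = Q1 (a, b, x) * Q2 (a, c, x)"
    proof (cases "Q0 (a,x) = 0")
      case True
      then have "Q1 (a, b, x) = 0" using nz1[of a b x] by blast
      then show ?thesis by (simp add: K_def)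
    qed (simp add: K_def)
    then show ?thesis using e1 e2 e3 q_Q0[of v] v by simp
  qed
qed

lemma q_PS: "prob q snd = prob p snd" using q_S PS_def by auto

lemma q_G1:
  assumes mk: "markov p fst xc (\<lambda>w. (y1c w, y2c w))"
  shows "prob q (\<lambda>w. ((uc 0 w, uc 1 w), xc w, y1c w)) = prob p (\<lambda>w. ((uc 0 w, uc 1 w), xc w, y1c w))"
proof (intro ext)
  fix v :: "(nat \<times> nat) \<times> 'x \<times> 'y1"
  obtain ab x y where v: "v = (ab, x, y)" by (cases v)
  have m1: "prob q (\<lambda>w. ((uc 0 w, uc 1 w), xc w, y1c w)) (ab, x, y) * prob q xc x =
     prob q (\<lambda>w. ((uc 0 w, uc 1 w), xc w)) (ab, x) * prob q (\<lambda>w. (xc w, y1c w)) (x, y)"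
    using mk_sub1[OF dq q_mk] unfolding markov_def by blast
  have m2: "prob p (\<lambda>w. ((uc 0 w, uc 1 w), xc w, y1c w)) (ab, x, y) * prob p xc x =
     prob p (\<lambda>w. ((uc 0 w, uc 1 w), xc w)) (ab, x) * prob p (\<lambda>w. (xc w, y1c w)) (x, y)"
    using mk_sub1[OF dp mk] unfolding markov_def by blast
  have e1: "prob q (\<lambda>w. ((uc 0 w, uc 1 w), xc w)) (ab, x) = prob p (\<lambda>w. ((uc 0 w, uc 1 w), xc w)) (ab, x)"
  proof -
    obtain a b where ab: "ab = (a,b)" by (cases ab)
    have "prob q (\<lambda>w. ((uc 0 w, uc 1 w), xc w)) (ab, x) = prob q (\<lambda>w. (uc 0 w, uc 1 w, xc w)) (a,b,x)"
      unfolding ab by (rule prob_cong) auto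
    also have "\<dots> = prob p (\<lambda>w. (uc 0 w, uc 1 w, xc w)) (a,b,x)" using q_Q1 Q1_def by simp
    also have "\<dots> = prob p (\<lambda>w. ((uc 0 w, uc 1 w), xc w)) (ab, x)"
      unfolding ab by (rule prob_cong) auto
    finally show ?thesis .
  qed
  have e2: "prob q (\<lambda>w. (xc w, y1c w)) = prob p (\<lambda>w. (xc w, y1c w))"
    using prob_eq_push[OF dq dp q_PS, of "\<lambda>s. (fst s, fst (snd s))"] by (simp add: xc_def y1c_def)
  have e3: "prob q xc x = prob p xc x" using q_X PX_def by simp
  show "prob q (\<lambda>w. ((uc 0 w, uc 1 w), xc w, y1c w)) v = prob p (\<lambda>w. ((uc 0 w, uc 1 w), xc w, y1c w)) v"
  proof (cases "prob p xc x = 0")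
    case True
    then have "prob q xc x = 0" using e3 by simp
    have "prob q (\<lambda>w. ((uc 0 w, uc 1 w), xc w, y1c w)) (ab, x, y) = 0"
      using prob_mid_nz[OF dq, of "\<lambda>w. (uc 0 w, uc 1 w)" xc y1c ab x y] \<open>prob q xc x = 0\<close> by blast
    moreover have "prob p (\<lambda>w. ((uc 0 w, uc 1 w), xc w, y1c w)) (ab, x, y) = 0"
      using prob_mid_nz[OF dp, of "\<lambda>w. (uc 0 w, uc 1 w)" xc y1c ab x y] True by blast
    ultimately show ?thesis using v by simp
  next
    case False
    have "prob q (\<lambda>w. ((uc 0 w, uc 1 w), xc w, y1c w)) (ab, x, y) * prob p xc x =
          prob p (\<lambda>w. ((uc 0 w, uc 1 w), xc w, y1c w)) (ab, x, y) * prob p xc x"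
      using m1 m2 e1 e2 e3 by simp
    then show ?thesis using False v by simp
  qed
qed

lemma q_G2:
  assumes mk: "markov p fst xc (\<lambda>w. (y1c w, y2c w))"
  shows "prob q (\<lambda>w. ((uc 0 w, uc 2 w), xc w, y2c w)) = prob p (\<lambda>w. ((uc 0 w, uc 2 w), xc w, y2c w))"
proof (intro ext)
  fix v :: "(nat \<times> nat) \<times> 'x \<times> 'y2"
  obtain ab x y where v: "v = (ab, x, y)" by (cases v)
  have m1: "prob q (\<lambda>w. ((uc 0 w, uc 2 w), xc w, y2c w)) (ab, x, y) * prob q xc x =
     prob q (\<lambda>w. ((uc 0 w, uc 2 w), xc w)) (ab, x) * prob q (\<lambda>w. (xc w, y2c w)) (x, y)"
    using mk_sub2[OF dq q_mk] unfolding markov_def by blast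
  have m2: "prob p (\<lambda>w. ((uc 0 w, uc 2 w), xc w, y2c w)) (ab, x, y) * prob p xc x =
     prob p (\<lambda>w. ((uc 0 w, uc 2 w), xc w)) (ab, x) * prob p (\<lambda>w. (xc w, y2c w)) (x, y)"
    using mk_sub2[OF dp mk] unfolding markov_def by blast
  have e1: "prob q (\<lambda>w. ((uc 0 w, uc 2 w), xc w)) (ab, x) = prob p (\<lambda>w. ((uc 0 w, uc 2 w), xc w)) (ab, x)"
  proof -
    obtain a b where ab: "ab = (a,b)" by (cases ab)
    have "prob q (\<lambda>w. ((uc 0 w, uc 2 w), xc w)) (ab, x) = prob q (\<lambda>w. (uc 0 w, uc 2 w, xc w)) (a,b,x)"
      unfolding ab by (rule prob_cong) auto
    also have "\<dots> = prob p (\<lambda>w. (uc 0 w, uc 2 w, xc w)) (a,b,x)" using q_Q2 Q2_def by simp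
    also have "\<dots> = prob p (\<lambda>w. ((uc 0 w, uc 2 w), xc w)) (ab, x)"
      unfolding ab by (rule prob_cong) auto
    finally show ?thesis .
  qed
  have e2: "prob q (\<lambda>w. (xc w, y2c w)) = prob p (\<lambda>w. (xc w, y2c w))"
    using prob_eq_push[OF dq dp q_PS, of "\<lambda>s. (fst s, snd (snd s))"] by (simp add: xc_def y2c_def)
  have e3: "prob q xc x = prob p xc x" using q_X PX_def by simp
  show "prob q (\<lambda>w. ((uc 0 w, uc 2 w), xc w, y2c w)) v = prob p (\<lambda>w. ((uc 0 w, uc 2 w), xc w, y2c w)) v"
  proof (cases "prob p xc x = 0")
    case True
    then have "prob q xc x = 0" using e3 by simp
    have "prob q (\<lambda>w. ((uc 0 w, uc 2 w), xc w, y2c w)) (ab, x, y) = 0"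
      using prob_mid_nz[OF dq, of "\<lambda>w. (uc 0 w, uc 2 w)" xc y2c ab x y] \<open>prob q xc x = 0\<close> by blast
    moreover have "prob p (\<lambda>w. ((uc 0 w, uc 2 w), xc w, y2c w)) (ab, x, y) = 0"
      using prob_mid_nz[OF dp, of "\<lambda>w. (uc 0 w, uc 2 w)" xc y2c ab x y] True by blast
    ultimately show ?thesis using v by simp
  next
    case False
    have "prob q (\<lambda>w. ((uc 0 w, uc 2 w), xc w, y2c w)) (ab, x, y) * prob p xc x =
          prob p (\<lambda>w. ((uc 0 w, uc 2 w), xc w, y2c w)) (ab, x, y) * prob p xc x"
      using m1 m2 e1 e2 e3 by simp
    then show ?thesis using False v by simp
  qed
qed

end



definition cn :: "nat set \<Rightarrow> bool \<Rightarrow> bool \<Rightarrow> bool \<Rightarrow> ((nat \<times> nat \<times> nat) \<times> 'x \<times> 'y1 \<times> 'y2)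
   \<Rightarrow> (nat \<Rightarrow> nat) \<times> 'x option \<times> 'y1 option \<times> 'y2 option" where
  "cn K bx b1 b2 w = (usub K w, if bx then Some (xc w) else None,
     if b1 then Some (y1c w) else None, if b2 then Some (y2c w) else None)"

definition H :: "((nat \<times> nat \<times> nat) \<times> 'x \<times> 'y1 \<times> 'y2 \<Rightarrow> real) \<Rightarrow> nat set \<Rightarrow> bool \<Rightarrow> bool \<Rightarrow> bool \<Rightarrow> real" where
  "H r K bx b1 b2 = entropy r (cn K bx b1 b2)"

lemma usub_eq: "usub K w = usub K w' \<longleftrightarrow> (\<forall>j\<in>K. uc j w = uc j w')"
  unfolding usub_def by (auto simp: fun_eq_iff)

lemma cn_eq: "cn K bx b1 b2 w = cn K bx b1 b2 w' \<longleftrightarrow> (\<forall>j\<in>K. uc j w = uc j w') \<and>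
   (bx \<longrightarrow> xc w = xc w') \<and> (b1 \<longrightarrow> y1c w = y1c w') \<and> (b2 \<longrightarrow> y2c w = y2c w')"
  unfolding cn_def by (auto simp: usub_eq)

lemma lt_simps: "{..<1::nat} = {0}" "{..<2::nat} = {0,1}" by auto

lemma ent_eq: "is_dist r \<Longrightarrow> (\<And>w w'. f w = f w' \<longleftrightarrow> g w = g w') \<Longrightarrow> entropy r f = entropy r g"
  by (rule entropy_cong) auto

lemma entropy_const: "is_dist r \<Longrightarrow> entropy r (\<lambda>w. c) = 0"
proof -
  assume d: "is_dist r"
  have "(\<lambda>w. c) ` supp r \<subseteq> {c}" by auto
  then have "(\<lambda>w. c) ` supp r = {} \<or> (\<lambda>w. c) ` supp r = {c}" by blast
  moreover have "prob r (\<lambda>w. c) c = 1" using d unfolding prob_def is_dist_def by simp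
  ultimately show ?thesis unfolding entropy_def by auto
qed

lemma H_empty: "is_dist r \<Longrightarrow> H r {} False False False = 0"
proof -
  assume d: "is_dist r"
  have eq: "cn {} False False False = (\<lambda>w. (\<lambda>j. 0, None, None, None))"
    by (auto simp: cn_def usub_def fun_eq_iff)
  show ?thesis unfolding H_def eq by (rule entropy_const[OF d])
qed

lemma ee0: "is_dist r \<Longrightarrow> entropy r xc = H r {} True False False"
  unfolding H_def by (rule ent_eq) (auto simp: cn_eq usub_eq lt_simps)

lemma ee1: "is_dist r \<Longrightarrow> entropy r (\<lambda>w. (xc w, usub {..<0} w)) = H r {} True False False"
  unfolding H_def by (rule ent_eq) (auto simp: cn_eq usub_eq lt_simps)

lemma ee2: "is_dist r \<Longrightarrow> entropy r (\<lambda>w. ((xc w, usub {..<0} w), uc 0 w)) = H r ({0}) True False False"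
  unfolding H_def by (rule ent_eq) (auto simp: cn_eq usub_eq lt_simps)

lemma ee3: "is_dist r \<Longrightarrow> entropy r (uc 0) = H r ({0}) False False False"
  unfolding H_def by (rule ent_eq) (auto simp: cn_eq usub_eq lt_simps)

lemma ee4: "is_dist r \<Longrightarrow> entropy r (\<lambda>w. (xc w, usub {..<1} w)) = H r ({0}) True False False"
  unfolding H_def by (rule ent_eq) (auto simp: cn_eq usub_eq lt_simps)

lemma ee5: "is_dist r \<Longrightarrow> entropy r (\<lambda>w. ((xc w, usub {..<1} w), uc 1 w)) = H r ({0,1}) True False False"
  unfolding H_def by (rule ent_eq) (auto simp: cn_eq usub_eq lt_simps)

lemma ee6: "is_dist r \<Longrightarrow> entropy r (uc 1) = H r ({1}) False False False"
  unfolding H_def by (rule ent_eq) (auto simp: cn_eq usub_eq lt_simps)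

lemma ee7: "is_dist r \<Longrightarrow> entropy r (\<lambda>w. (xc w, usub {..<2} w)) = H r ({0,1}) True False False"
  unfolding H_def by (rule ent_eq) (auto simp: cn_eq usub_eq lt_simps)

lemma ee8: "is_dist r \<Longrightarrow> entropy r (\<lambda>w. ((xc w, usub {..<2} w), uc 2 w)) = H r ({0,1,2}) True False False"
  unfolding H_def by (rule ent_eq) (auto simp: cn_eq usub_eq lt_simps)

lemma ee9: "is_dist r \<Longrightarrow> entropy r (uc 2) = H r ({2}) False False False"
  unfolding H_def by (rule ent_eq) (auto simp: cn_eq usub_eq lt_simps)

lemma ee10: "is_dist r \<Longrightarrow> entropy r (\<lambda>w. (xc w, y1c w)) = H r {} True True False"
  unfolding H_def by (rule ent_eq) (auto simp: cn_eq usub_eq lt_simps)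

lemma ee11: "is_dist r \<Longrightarrow> entropy r y1c = H r {} False True False"
  unfolding H_def by (rule ent_eq) (auto simp: cn_eq usub_eq lt_simps)

lemma ee12: "is_dist r \<Longrightarrow> entropy r (\<lambda>w. (xc w, uc 0 w, y1c w)) = H r ({0}) True True False"
  unfolding H_def by (rule ent_eq) (auto simp: cn_eq usub_eq lt_simps)

lemma ee13: "is_dist r \<Longrightarrow> entropy r (\<lambda>w. (uc 0 w, y1c w)) = H r ({0}) False True False"
  unfolding H_def by (rule ent_eq) (auto simp: cn_eq usub_eq lt_simps)

lemma ee14: "is_dist r \<Longrightarrow> entropy r (\<lambda>w. (xc w, y2c w)) = H r {} True False True"
  unfolding H_def by (rule ent_eq) (auto simp: cn_eq usub_eq lt_simps)

lemma ee15: "is_dist r \<Longrightarrow> entropy r y2c = H r {} False False True"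
  unfolding H_def by (rule ent_eq) (auto simp: cn_eq usub_eq lt_simps)

lemma ee16: "is_dist r \<Longrightarrow> entropy r (\<lambda>w. (xc w, uc 0 w, y2c w)) = H r ({0}) True False True"
  unfolding H_def by (rule ent_eq) (auto simp: cn_eq usub_eq lt_simps)

lemma ee17: "is_dist r \<Longrightarrow> entropy r (\<lambda>w. (uc 0 w, y2c w)) = H r ({0}) False False True"
  unfolding H_def by (rule ent_eq) (auto simp: cn_eq usub_eq lt_simps)

lemma ee18: "is_dist r \<Longrightarrow> entropy r (\<lambda>w. (xc w, uc 1 w, uc 0 w, y1c w)) = H r ({0,1}) True True False"
  unfolding H_def by (rule ent_eq) (auto simp: cn_eq usub_eq lt_simps)

lemma ee19: "is_dist r \<Longrightarrow> entropy r (\<lambda>w. (uc 1 w, uc 0 w, y1c w)) = H r ({0,1}) False True False"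
  unfolding H_def by (rule ent_eq) (auto simp: cn_eq usub_eq lt_simps)

lemma ee20: "is_dist r \<Longrightarrow> entropy r (\<lambda>w. (xc w, uc 2 w, uc 0 w, y2c w)) = H r ({0,2}) True False True"
  unfolding H_def by (rule ent_eq) (auto simp: cn_eq usub_eq lt_simps)

lemma ee21: "is_dist r \<Longrightarrow> entropy r (\<lambda>w. (uc 2 w, uc 0 w, y2c w)) = H r ({0,2}) False False True"
  unfolding H_def by (rule ent_eq) (auto simp: cn_eq usub_eq lt_simps)

lemma ee22: "is_dist r \<Longrightarrow> entropy r (\<lambda>w. (uc 0 w, uc 1 w, y1c w)) = H r ({0,1}) False True False"
  unfolding H_def by (rule ent_eq) (auto simp: cn_eq usub_eq lt_simps)

lemma ee23: "is_dist r \<Longrightarrow> entropy r (\<lambda>w. (uc 1 w, y1c w)) = H r ({1}) False True False"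
  unfolding H_def by (rule ent_eq) (auto simp: cn_eq usub_eq lt_simps)

lemma ee24: "is_dist r \<Longrightarrow> entropy r (\<lambda>w. (uc 0 w, uc 2 w, y2c w)) = H r ({0,2}) False False True"
  unfolding H_def by (rule ent_eq) (auto simp: cn_eq usub_eq lt_simps)

lemma ee25: "is_dist r \<Longrightarrow> entropy r (\<lambda>w. (uc 2 w, y2c w)) = H r ({2}) False False True"
  unfolding H_def by (rule ent_eq) (auto simp: cn_eq usub_eq lt_simps)

lemma ee26: "is_dist r \<Longrightarrow> entropy r (\<lambda>w. (uc 0 w, ())) = H r ({0}) False False False"
  unfolding H_def by (rule ent_eq) (auto simp: cn_eq usub_eq lt_simps)

lemma ee27: "is_dist r \<Longrightarrow> entropy r (\<lambda>w. ()) = H r {} False False False"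
  unfolding H_def by (rule ent_eq) (auto simp: cn_eq usub_eq lt_simps)

lemma ee28: "is_dist r \<Longrightarrow> entropy r (\<lambda>w. (uc 0 w, y1c w, ())) = H r ({0}) False True False"
  unfolding H_def by (rule ent_eq) (auto simp: cn_eq usub_eq lt_simps)

lemma ee29: "is_dist r \<Longrightarrow> entropy r (\<lambda>w. (y1c w, ())) = H r {} False True False"
  unfolding H_def by (rule ent_eq) (auto simp: cn_eq usub_eq lt_simps)

lemma ee30: "is_dist r \<Longrightarrow> entropy r (\<lambda>w. (uc 0 w, y2c w, ())) = H r ({0}) False False True"
  unfolding H_def by (rule ent_eq) (auto simp: cn_eq usub_eq lt_simps)

lemma ee31: "is_dist r \<Longrightarrow> entropy r (\<lambda>w. (y2c w, ())) = H r {} False False True"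
  unfolding H_def by (rule ent_eq) (auto simp: cn_eq usub_eq lt_simps)

lemma ee32: "is_dist r \<Longrightarrow> entropy r (\<lambda>w. (uc 1 w, ())) = H r ({1}) False False False"
  unfolding H_def by (rule ent_eq) (auto simp: cn_eq usub_eq lt_simps)

lemma ee33: "is_dist r \<Longrightarrow> entropy r (\<lambda>w. (uc 1 w, (uc 0 w, y1c w), ())) = H r ({0,1}) False True False"
  unfolding H_def by (rule ent_eq) (auto simp: cn_eq usub_eq lt_simps)

lemma ee34: "is_dist r \<Longrightarrow> entropy r (\<lambda>w. ((uc 0 w, y1c w), ())) = H r ({0}) False True False"
  unfolding H_def by (rule ent_eq) (auto simp: cn_eq usub_eq lt_simps)

lemma ee35: "is_dist r \<Longrightarrow> entropy r (\<lambda>w. (uc 2 w, ())) = H r ({2}) False False False"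
  unfolding H_def by (rule ent_eq) (auto simp: cn_eq usub_eq lt_simps)

lemma ee36: "is_dist r \<Longrightarrow> entropy r (\<lambda>w. (uc 2 w, (uc 0 w, y2c w), ())) = H r ({0,2}) False False True"
  unfolding H_def by (rule ent_eq) (auto simp: cn_eq usub_eq lt_simps)

lemma ee37: "is_dist r \<Longrightarrow> entropy r (\<lambda>w. ((uc 0 w, y2c w), ())) = H r ({0}) False False True"
  unfolding H_def by (rule ent_eq) (auto simp: cn_eq usub_eq lt_simps)

lemma ee38: "is_dist r \<Longrightarrow> entropy r (\<lambda>w. (uc 0 w, xc w, y1c w)) = H r ({0}) True True False"
  unfolding H_def by (rule ent_eq) (auto simp: cn_eq usub_eq lt_simps)

lemma ee39: "is_dist r \<Longrightarrow> entropy r (\<lambda>w. (uc 0 w, xc w)) = H r ({0}) True False False"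
  unfolding H_def by (rule ent_eq) (auto simp: cn_eq usub_eq lt_simps)

lemma ee40: "is_dist r \<Longrightarrow> entropy r (\<lambda>w. (uc 0 w, xc w, y2c w)) = H r ({0}) True False True"
  unfolding H_def by (rule ent_eq) (auto simp: cn_eq usub_eq lt_simps)

lemma ee41: "is_dist r \<Longrightarrow> entropy r (\<lambda>w. ((uc 0 w, uc 1 w), xc w, y1c w)) = H r ({0,1}) True True False"
  unfolding H_def by (rule ent_eq) (auto simp: cn_eq usub_eq lt_simps)

lemma ee42: "is_dist r \<Longrightarrow> entropy r (\<lambda>w. ((uc 0 w, uc 1 w), xc w)) = H r ({0,1}) True False False"
  unfolding H_def by (rule ent_eq) (auto simp: cn_eq usub_eq lt_simps)

lemma ee43: "is_dist r \<Longrightarrow> entropy r (\<lambda>w. ((uc 0 w, uc 2 w), xc w, y2c w)) = H r ({0,2}) True False True"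
  unfolding H_def by (rule ent_eq) (auto simp: cn_eq usub_eq lt_simps)

lemma ee44: "is_dist r \<Longrightarrow> entropy r (\<lambda>w. ((uc 0 w, uc 2 w), xc w)) = H r ({0,2}) True False False"
  unfolding H_def by (rule ent_eq) (auto simp: cn_eq usub_eq lt_simps)

lemma ee45: "is_dist r \<Longrightarrow> entropy r (\<lambda>w. (uc 1 w, (uc 0 w, xc w), uc 2 w)) = H r ({0,1,2}) True False False"
  unfolding H_def by (rule ent_eq) (auto simp: cn_eq usub_eq lt_simps)

lemma ee46: "is_dist r \<Longrightarrow> entropy r (\<lambda>w. (uc 1 w, (uc 0 w, xc w))) = H r ({0,1}) True False False"
  unfolding H_def by (rule ent_eq) (auto simp: cn_eq usub_eq lt_simps)

lemma ee47: "is_dist r \<Longrightarrow> entropy r (\<lambda>w. ((uc 0 w, xc w), uc 2 w)) = H r ({0,2}) True False False"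
  unfolding H_def by (rule ent_eq) (auto simp: cn_eq usub_eq lt_simps)

lemma ee48: "is_dist r \<Longrightarrow> entropy r (\<lambda>w. (usub {0} w, usub ({0,1} - {0}) w, y1c w)) = H r ({0,1}) False True False"
  unfolding H_def by (rule ent_eq) (auto simp: cn_eq usub_eq lt_simps)

lemma ee49: "is_dist r \<Longrightarrow> entropy r (\<lambda>w. (usub ({0,1} - {0}) w, y1c w)) = H r ({1}) False True False"
  unfolding H_def by (rule ent_eq) (auto simp: cn_eq usub_eq lt_simps)

lemma ee50: "is_dist r \<Longrightarrow> entropy r (\<lambda>w. (usub {1} w, usub ({0,1} - {1}) w, y1c w)) = H r ({0,1}) False True False"
  unfolding H_def by (rule ent_eq) (auto simp: cn_eq usub_eq lt_simps)

lemma ee51: "is_dist r \<Longrightarrow> entropy r (\<lambda>w. (usub ({0,1} - {1}) w, y1c w)) = H r ({0}) False True False"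
  unfolding H_def by (rule ent_eq) (auto simp: cn_eq usub_eq lt_simps)

lemma ee52: "is_dist r \<Longrightarrow> entropy r (\<lambda>w. (usub {0,1} w, usub ({0,1} - {0,1}) w, y1c w)) = H r ({0,1}) False True False"
  unfolding H_def by (rule ent_eq) (auto simp: cn_eq usub_eq lt_simps)

lemma ee53: "is_dist r \<Longrightarrow> entropy r (\<lambda>w. (usub ({0,1} - {0,1}) w, y1c w)) = H r {} False True False"
  unfolding H_def by (rule ent_eq) (auto simp: cn_eq usub_eq lt_simps)

lemma ee54: "is_dist r \<Longrightarrow> entropy r (\<lambda>w. (usub {0} w, usub ({0,2} - {0}) w, y2c w)) = H r ({0,2}) False False True"
  unfolding H_def by (rule ent_eq) (auto simp: cn_eq usub_eq lt_simps)

lemma ee55: "is_dist r \<Longrightarrow> entropy r (\<lambda>w. (usub ({0,2} - {0}) w, y2c w)) = H r ({2}) False False True"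
  unfolding H_def by (rule ent_eq) (auto simp: cn_eq usub_eq lt_simps)

lemma ee56: "is_dist r \<Longrightarrow> entropy r (\<lambda>w. (usub {2} w, usub ({0,2} - {2}) w, y2c w)) = H r ({0,2}) False False True"
  unfolding H_def by (rule ent_eq) (auto simp: cn_eq usub_eq lt_simps)

lemma ee57: "is_dist r \<Longrightarrow> entropy r (\<lambda>w. (usub ({0,2} - {2}) w, y2c w)) = H r ({0}) False False True"
  unfolding H_def by (rule ent_eq) (auto simp: cn_eq usub_eq lt_simps)

lemma ee58: "is_dist r \<Longrightarrow> entropy r (\<lambda>w. (usub {0,2} w, usub ({0,2} - {0,2}) w, y2c w)) = H r ({0,2}) False False True"
  unfolding H_def by (rule ent_eq) (auto simp: cn_eq usub_eq lt_simps)

lemma ee59: "is_dist r \<Longrightarrow> entropy r (\<lambda>w. (usub ({0,2} - {0,2}) w, y2c w)) = H r {} False False True"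
  unfolding H_def by (rule ent_eq) (auto simp: cn_eq usub_eq lt_simps)

lemmas ees = ee0 ee1 ee2 ee3 ee4 ee5 ee6 ee7 ee8 ee9 ee10 ee11 ee12 ee13 ee14 ee15 ee16 ee17 ee18 ee19 ee20 ee21 ee22 ee23 ee24 ee25 ee26 ee27 ee28 ee29 ee30 ee31 ee32 ee33 ee34 ee35 ee36 ee37 ee38 ee39 ee40 ee41 ee42 ee43 ee44 ee45 ee46 ee47 ee48 ee49 ee50 ee51 ee52 ee53 ee54 ee55 ee56 ee57 ee58 ee59



lemma sub01: "J \<noteq> {} \<Longrightarrow> J \<subseteq> {a, b} \<Longrightarrow> J = {a} \<or> J = {b} \<or> J = {a, b}"
  by blast

lemma rates:
  fixes q :: "(nat \<times> nat \<times> nat) \<times> 'x \<times> 'y1 \<times> 'y2 \<Rightarrow> real"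
  assumes dq: "is_dist q" and mk: "markov q fst xc (\<lambda>w. (y1c w, y2c w))"
    and ci: "markov q (uc 1) (\<lambda>w. (uc 0 w, xc w)) (uc 2)"
  shows "\<exists>R R'. (\<forall>j<3. 0 \<le> R j \<and> 0 \<le> R' j \<and>
        mutual_info q (\<lambda>w. (xc w, usub {..<j} w)) (uc j) \<le> R j + R' j) \<and>
     (\<forall>J. J \<noteq> {} \<and> J \<subseteq> {0,1} \<longrightarrow> (\<Sum>j\<in>J. R' j) \<le> (\<Sum>j\<in>J. entropy q (uc j))
           - cond_entropy q (usub J) (\<lambda>w. (usub ({0,1} - J) w, y1c w))) \<and>
     (\<forall>J. J \<noteq> {} \<and> J \<subseteq> {0,2} \<longrightarrow> (\<Sum>j\<in>J. R' j) \<le> (\<Sum>j\<in>J. entropy q (uc j))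
           - cond_entropy q (usub J) (\<lambda>w. (usub ({0,2} - J) w, y2c w))) \<and>
     R 0 + R 1 + R 2 = max (cond_mutual_info q xc (uc 0) y1c) (cond_mutual_info q xc (uc 0) y2c)
        + cond_mutual_info q xc (uc 1) (\<lambda>w. (uc 0 w, y1c w))
        + cond_mutual_info q xc (uc 2) (\<lambda>w. (uc 0 w, y2c w))"
proof -
  note E = ees[OF dq]
  have m0A: "entropy q (\<lambda>w. (uc 0 w, xc w, y1c w)) + entropy q xc = entropy q (\<lambda>w. (uc 0 w, xc w)) + entropy q (\<lambda>w. (xc w, y1c w))"
    by (rule markov_entropy[OF dq mk_sub0(1)[OF dq mk]])
  have m0B: "entropy q (\<lambda>w. (uc 0 w, xc w, y2c w)) + entropy q xc = entropy q (\<lambda>w. (uc 0 w, xc w)) + entropy q (\<lambda>w. (xc w, y2c w))"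
    by (rule markov_entropy[OF dq mk_sub0(2)[OF dq mk]])
  have m1: "entropy q (\<lambda>w. ((uc 0 w, uc 1 w), xc w, y1c w)) + entropy q xc = entropy q (\<lambda>w. ((uc 0 w, uc 1 w), xc w)) + entropy q (\<lambda>w. (xc w, y1c w))"
    by (rule markov_entropy[OF dq mk_sub1[OF dq mk]])
  have m2: "entropy q (\<lambda>w. ((uc 0 w, uc 2 w), xc w, y2c w)) + entropy q xc = entropy q (\<lambda>w. ((uc 0 w, uc 2 w), xc w)) + entropy q (\<lambda>w. (xc w, y2c w))"
    by (rule markov_entropy[OF dq mk_sub2[OF dq mk]])
  have mci: "entropy q (\<lambda>w. (uc 1 w, (uc 0 w, xc w), uc 2 w)) + entropy q (\<lambda>w. (uc 0 w, xc w)) = entropy q (\<lambda>w. (uc 1 w, (uc 0 w, xc w))) + entropy q (\<lambda>w. ((uc 0 w, xc w), uc 2 w))"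
    by (rule markov_entropy[OF dq ci])
  note ms = m0A m0B m1 m2 mci
  note ns = cmi_nonneg[OF dq, of xc "uc 0" y1c] cmi_nonneg[OF dq, of xc "uc 0" y2c]
    cmi_nonneg[OF dq, of xc "uc 1" "\<lambda>w. (uc 0 w, y1c w)"] cmi_nonneg[OF dq, of xc "uc 2" "\<lambda>w. (uc 0 w, y2c w)"]
    cmi_nonneg[OF dq, of "uc 0" "uc 1" y1c] cmi_nonneg[OF dq, of "uc 0" "uc 2" y2c]
    cmi_nonneg[OF dq, of "uc 0" y1c "\<lambda>w. ()"] cmi_nonneg[OF dq, of "uc 0" y2c "\<lambda>w. ()"]
    cmi_nonneg[OF dq, of "uc 1" "\<lambda>w. (uc 0 w, y1c w)" "\<lambda>w. ()"] cmi_nonneg[OF dq, of "uc 2" "\<lambda>w. (uc 0 w, y2c w)" "\<lambda>w. ()"]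
  have F: "H q {0} True True False + H q {} True False False = H q {0} True False False + H q {} True True False"
    "H q {0} True False True + H q {} True False False = H q {0} True False False + H q {} True False True"
    "H q {0,1} True True False + H q {} True False False = H q {0,1} True False False + H q {} True True False"
    "H q {0,2} True False True + H q {} True False False = H q {0,2} True False False + H q {} True False True"
    "H q {0,1,2} True False False + H q {0} True False False = H q {0,1} True False False + H q {0,2} True False False"
    using ms by (simp_all only: E)
  have N: "0 \<le> H q {} True True False - H q {} False True False - (H q {0} True True False - H q {0} False True False)"
    "0 \<le> H q {} True False True - H q {} False False True - (H q {0} True False True - H q {0} False False True)"
    "0 \<le> H q {0} True True False - H q {0} False True False - (H q {0,1} True True False - H q {0,1} False True False)"
    "0 \<le> H q {0} True False True - H q {0} False False True - (H q {0,2} True False True - H q {0,2} False False True)"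
    "0 \<le> H q {0} False True False - H q {} False True False - (H q {0,1} False True False - H q {1} False True False)"
    "0 \<le> H q {0} False False True - H q {} False False True - (H q {0,2} False False True - H q {2} False False True)"
    "0 \<le> H q {0} False False False - H q {} False False False - (H q {0} False True False - H q {} False True False)"
    "0 \<le> H q {0} False False False - H q {} False False False - (H q {0} False False True - H q {} False False True)"
    "0 \<le> H q {1} False False False - H q {} False False False - (H q {0,1} False True False - H q {0} False True False)"
    "0 \<le> H q {2} False False False - H q {} False False False - (H q {0,2} False False True - H q {0} False False True)"
    using ns unfolding cond_mutual_info_def cond_entropy_def by (simp_all only: E)
  have H0: "H q {} False False False = 0" by (rule H_empty[OF dq])
  define a1 where "a1 = H q {0} False False False + H q {} False True False - H q {0} False True False"
  define a2 where "a2 = H q {0} False False False + H q {} False False True - H q {0} False False True"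
  define I0 where "I0 = H q {} True False False - H q {0} True False False + H q {0} False False False"
  define I1 where "I1 = H q {0} True False False - H q {0,1} True False False + H q {1} False False False"
  define I2 where "I2 = H q {0,1} True False False - H q {0,1,2} True False False + H q {2} False False False"
  define r0 where "r0 = min a1 a2"
  define r1 where "r1 = H q {1} False False False + H q {0} False True False - H q {0,1} False True False"
  define r2 where "r2 = H q {2} False False False + H q {0} False False True - H q {0,2} False False True"
  define R' where "R' = (\<lambda>j::nat. if j = 0 then r0 else if j = 1 then r1 else r2)"
  define R where "R = (\<lambda>j::nat. if j = 0 then I0 - r0 else if j = 1 then I1 - r1 else I2 - r2)"
  have mn: "r0 \<le> a1" "r0 \<le> a2" "r0 = a1 \<or> r0 = a2" unfolding r0_def by auto
  have R'0: "R' 0 = r0" "R' 1 = r1" "R' 2 = r2" unfolding R'_def by simp_all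
  have R0: "R 0 = I0 - r0" "R 1 = I1 - r1" "R 2 = I2 - r2" unfolding R_def by simp_all
  have MI: "mutual_info q (\<lambda>w. (xc w, usub {..<0} w)) (uc 0) = I0"
    "mutual_info q (\<lambda>w. (xc w, usub {..<1} w)) (uc 1) = I1"
    "mutual_info q (\<lambda>w. (xc w, usub {..<2} w)) (uc 2) = I2"
    unfolding mutual_info_def cond_entropy_def I0_def I1_def I2_def by (simp_all only: E)
  have c1: "\<forall>j<3. 0 \<le> R j \<and> 0 \<le> R' j \<and>
        mutual_info q (\<lambda>w. (xc w, usub {..<j} w)) (uc j) \<le> R j + R' j"
  proof (intro allI impI)
    fix j :: nat assume "j < 3"
    then have "j = 0 \<or> j = 1 \<or> j = 2" by auto
    then show "0 \<le> R j \<and> 0 \<le> R' j \<and> mutual_info q (\<lambda>w. (xc w, usub {..<j} w)) (uc j) \<le> R j + R' j"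
    proof (elim disjE)
      assume j: "j = 0"
      show ?thesis unfolding j MI R0 R'0 using F N H0 mn unfolding I0_def a1_def a2_def by linarith
    next
      assume j: "j = 1"
      show ?thesis unfolding j MI R0 R'0 using F N H0 unfolding I1_def r1_def by linarith
    next
      assume j: "j = 2"
      show ?thesis unfolding j MI R0 R'0 using F N H0 unfolding I2_def r2_def by linarith
    qed
  qed
  have c2: "\<forall>J. J \<noteq> {} \<and> J \<subseteq> {0,1} \<longrightarrow> (\<Sum>j\<in>J. R' j) \<le> (\<Sum>j\<in>J. entropy q (uc j))
           - cond_entropy q (usub J) (\<lambda>w. (usub ({0,1} - J) w, y1c w))"
  proof (intro allI impI)
    fix J :: "nat set" assume "J \<noteq> {} \<and> J \<subseteq> {0,1}"
    then have "J = {0} \<or> J = {1} \<or> J = {0,1}" using sub01 by blast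
    then show "(\<Sum>j\<in>J. R' j) \<le> (\<Sum>j\<in>J. entropy q (uc j)) - cond_entropy q (usub J) (\<lambda>w. (usub ({0,1} - J) w, y1c w))"
    proof (elim disjE)
      assume j: "J = {0}"
      have "cond_entropy q (usub {0}) (\<lambda>w. (usub ({0,1} - {0}) w, y1c w)) = H q {0,1} False True False - H q {1} False True False"
        unfolding cond_entropy_def by (simp only: E)
      then show ?thesis unfolding j using F N H0 mn E(4) R'0 unfolding a1_def by simp
    next
      assume j: "J = {1}"
      have "cond_entropy q (usub {1}) (\<lambda>w. (usub ({0,1} - {1}) w, y1c w)) = H q {0,1} False True False - H q {0} False True False"
        unfolding cond_entropy_def by (simp only: E)
      then show ?thesis unfolding j using F N H0 mn E(7) R'0 unfolding r1_def by simp
    next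
      assume j: "J = {0,1}"
      have "cond_entropy q (usub {0,1}) (\<lambda>w. (usub ({0,1} - {0,1}) w, y1c w)) = H q {0,1} False True False - H q {} False True False"
        unfolding cond_entropy_def by (simp only: E)
      then show ?thesis unfolding j using F N H0 mn E(4) E(7) R'0 unfolding a1_def r1_def by simp
    qed
  qed
  have c3: "\<forall>J. J \<noteq> {} \<and> J \<subseteq> {0,2} \<longrightarrow> (\<Sum>j\<in>J. R' j) \<le> (\<Sum>j\<in>J. entropy q (uc j))
           - cond_entropy q (usub J) (\<lambda>w. (usub ({0,2} - J) w, y2c w))"
  proof (intro allI impI)
    fix J :: "nat set" assume "J \<noteq> {} \<and> J \<subseteq> {0,2}"
    then have "J = {0} \<or> J = {2} \<or> J = {0,2}" using sub01 by blast
    then show "(\<Sum>j\<in>J. R' j) \<le> (\<Sum>j\<in>J. entropy q (uc j)) - cond_entropy q (usub J) (\<lambda>w. (usub ({0,2} - J) w, y2c w))"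
    proof (elim disjE)
      assume j: "J = {0}"
      have "cond_entropy q (usub {0}) (\<lambda>w. (usub ({0,2} - {0}) w, y2c w)) = H q {0,2} False False True - H q {2} False False True"
        unfolding cond_entropy_def by (simp only: E)
      then show ?thesis unfolding j using F N H0 mn E(4) R'0 unfolding a2_def by simp
    next
      assume j: "J = {2}"
      have "cond_entropy q (usub {2}) (\<lambda>w. (usub ({0,2} - {2}) w, y2c w)) = H q {0,2} False False True - H q {0} False False True"
        unfolding cond_entropy_def by (simp only: E)
      then show ?thesis unfolding j using F N H0 mn E(10) R'0 unfolding r2_def by simp
    next
      assume j: "J = {0,2}"
      have "cond_entropy q (usub {0,2}) (\<lambda>w. (usub ({0,2} - {0,2}) w, y2c w)) = H q {0,2} False False True - H q {} False False True"
        unfolding cond_entropy_def by (simp only: E)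
      then show ?thesis unfolding j using F N H0 mn E(4) E(10) R'0 unfolding a2_def r2_def by simp
    qed
  qed
  have T: "cond_mutual_info q xc (uc 0) y1c = H q {} True True False - H q {} False True False - (H q {0} True True False - H q {0} False True False)"
    "cond_mutual_info q xc (uc 0) y2c = H q {} True False True - H q {} False False True - (H q {0} True False True - H q {0} False False True)"
    "cond_mutual_info q xc (uc 1) (\<lambda>w. (uc 0 w, y1c w)) = H q {0} True True False - H q {0} False True False - (H q {0,1} True True False - H q {0,1} False True False)"
    "cond_mutual_info q xc (uc 2) (\<lambda>w. (uc 0 w, y2c w)) = H q {0} True False True - H q {0} False False True - (H q {0,2} True False True - H q {0,2} False False True)"
    unfolding cond_mutual_info_def cond_entropy_def by (simp_all only: E)
  have t1: "I0 - a1 = cond_mutual_info q xc (uc 0) y1c" "I0 - a2 = cond_mutual_info q xc (uc 0) y2c"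
    unfolding T I0_def a1_def a2_def using F by linarith+
  have t2: "I1 - r1 = cond_mutual_info q xc (uc 1) (\<lambda>w. (uc 0 w, y1c w))"
    unfolding T I1_def r1_def using F by linarith
  have t3: "I2 - r2 = cond_mutual_info q xc (uc 2) (\<lambda>w. (uc 0 w, y2c w))"
    unfolding T I2_def r2_def using F by linarith
  have t0: "I0 - r0 = max (I0 - a1) (I0 - a2)" unfolding r0_def by (simp add: max_def min_def)
  have c4: "R 0 + R 1 + R 2 = max (cond_mutual_info q xc (uc 0) y1c) (cond_mutual_info q xc (uc 0) y2c)
        + cond_mutual_info q xc (uc 1) (\<lambda>w. (uc 0 w, y1c w))
        + cond_mutual_info q xc (uc 2) (\<lambda>w. (uc 0 w, y2c w))"
    unfolding R0 t0 t1 t2 t3 ..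
  show ?thesis using c1 c2 c3 c4 by blast
qed




lemma cmi_transfer:
  assumes dp: "is_dist p" and dq: "is_dist q" and eq: "prob p G = prob q G"
  shows "cond_mutual_info p (\<lambda>w. a (G w)) (\<lambda>w. b (G w)) (\<lambda>w. c (G w)) =
         cond_mutual_info q (\<lambda>w. a (G w)) (\<lambda>w. b (G w)) (\<lambda>w. c (G w))"
proof -
  have e: "entropy p (\<lambda>w. \<phi> (G w)) = entropy q (\<lambda>w. \<phi> (G w))" for \<phi> :: "_ \<Rightarrow> 'z"
    by (rule entropy_eq_dist[OF dp dq prob_eq_push[OF dp dq eq]])
  show ?thesis unfolding cond_mutual_info_def cond_entropy_def
    using e[of "\<lambda>v. (a v, c v)"] e[of c] e[of "\<lambda>v. (a v, b v, c v)"] e[of "\<lambda>v. (b v, c v)"]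
    by simp
qed

lemma dec1: "dec [{1,2},{1},{2}] 1 = {0,1}"
  unfolding dec_def by (auto simp: less_Suc_eq numeral_3_eq_3)

lemma dec2: "dec [{1,2},{1},{2}] 2 = {0,2}"
  unfolding dec_def by (auto simp: less_Suc_eq numeral_3_eq_3)

theorem lemma1:
  fixes PXY :: "'x::finite \<times> 'y1::finite \<times> 'y2::finite \<Rightarrow> real"
    and d1 :: "'x \<Rightarrow> 'z1::finite \<Rightarrow> real"
    and d2 :: "'x \<Rightarrow> 'z2::finite \<Rightarrow> real"
    and D :: "real \<times> real"
  assumes "is_dist PXY"
  shows "Rach PXY d1 d2 D \<le> RT PXY d1 d2 D"
proof -
  have A: "Rach PXY d1 d2 D \<le> Rach' PXY d1 d2 D"
  proof -
    have eq: "(\<Sum>k<(1::nat). ereal ((\<lambda>_. 1) k) * Rach' PXY d1 d2 ((\<lambda>_. D) k)) = Rach' PXY d1 d2 D" by simp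
    have mem: "(\<Sum>k<(1::nat). ereal ((\<lambda>_. 1) k) * Rach' PXY d1 d2 ((\<lambda>_. D) k)) \<in>
      {(\<Sum>k<(n::nat). ereal (c k) * Rach' PXY d1 d2 (Ds k)) | n c Ds.
      (\<forall>k<n. 0 \<le> c k) \<and> (\<Sum>k<n. c k) = 1 \<and>
      (\<Sum>k<n. c k * fst (Ds k)) = fst D \<and> (\<Sum>k<n. c k * snd (Ds k)) = snd D}"
      by (intro CollectI exI[of _ 1] exI[of _ "\<lambda>_. 1"] exI[of _ "\<lambda>_. D"]) simp
    have "lower_convex_env (Rach' PXY d1 d2) D \<le> (\<Sum>k<(1::nat). ereal ((\<lambda>_. 1) k) * Rach' PXY d1 d2 ((\<lambda>_. D) k))"
      unfolding lower_convex_env_def by (rule Inf_lower[OF mem])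
    then show ?thesis unfolding Rach_def eq .
  qed
  have B: "Rach' PXY d1 d2 D \<le> RT PXY d1 d2 D"
    unfolding RT_def
  proof (rule Inf_greatest)
    fix z assume "z \<in> {ereal (
        max (cond_mutual_info p xc (uc 0) y1c) (cond_mutual_info p xc (uc 0) y2c)
        + cond_mutual_info p xc (uc 1) (\<lambda>w. (uc 0 w, y1c w))
        + cond_mutual_info p xc (uc 2) (\<lambda>w. (uc 0 w, y2c w))) | p.
      is_dist p \<and> prob p snd = PXY \<and>
      markov p fst xc (\<lambda>w. (y1c w, y2c w)) \<and>
      (\<exists>(g1 :: nat \<Rightarrow> nat \<Rightarrow> 'y1 \<Rightarrow> 'z1) (g2 :: nat \<Rightarrow> nat \<Rightarrow> 'y2 \<Rightarrow> 'z2).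
        expect p (\<lambda>w. d1 (xc w) (g1 (uc 0 w) (uc 1 w) (y1c w))) \<le> fst D \<and>
        expect p (\<lambda>w. d2 (xc w) (g2 (uc 0 w) (uc 2 w) (y2c w))) \<le> snd D)}"
    then obtain p g1 g2 where z: "z = ereal (
        max (cond_mutual_info p xc (uc 0) y1c) (cond_mutual_info p xc (uc 0) y2c)
        + cond_mutual_info p xc (uc 1) (\<lambda>w. (uc 0 w, y1c w))
        + cond_mutual_info p xc (uc 2) (\<lambda>w. (uc 0 w, y2c w)))"
      and dp: "is_dist p" and pPXY: "prob p snd = PXY" and mk: "markov p fst xc (\<lambda>w. (y1c w, y2c w))"
      and g1: "expect p (\<lambda>w. d1 (xc w) ((g1 :: nat \<Rightarrow> nat \<Rightarrow> 'y1 \<Rightarrow> 'z1) (uc 0 w) (uc 1 w) (y1c w))) \<le> fst D"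
      and g2: "expect p (\<lambda>w. d2 (xc w) ((g2 :: nat \<Rightarrow> nat \<Rightarrow> 'y2 \<Rightarrow> 'z2) (uc 0 w) (uc 2 w) (y2c w))) \<le> snd D"
      apply -
      apply (simp only: mem_Collect_eq)
      apply (elim exE conjE)
      apply (rule that)
      apply assumption+
      done
    interpret constr p by (rule constr.intro[OF dp])
    obtain R R' where r1: "\<forall>j<3. 0 \<le> R j \<and> 0 \<le> R' j \<and>
        mutual_info q (\<lambda>w. (xc w, usub {..<j} w)) (uc j) \<le> R j + R' j"
      and r2: "\<forall>J. J \<noteq> {} \<and> J \<subseteq> {0,1} \<longrightarrow> (\<Sum>j\<in>J. R' j) \<le> (\<Sum>j\<in>J. entropy q (uc j))
           - cond_entropy q (usub J) (\<lambda>w. (usub ({0,1} - J) w, y1c w))"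
      and r3: "\<forall>J. J \<noteq> {} \<and> J \<subseteq> {0,2} \<longrightarrow> (\<Sum>j\<in>J. R' j) \<le> (\<Sum>j\<in>J. entropy q (uc j))
           - cond_entropy q (usub J) (\<lambda>w. (usub ({0,2} - J) w, y2c w))"
      and r4: "R 0 + R 1 + R 2 = max (cond_mutual_info q xc (uc 0) y1c) (cond_mutual_info q xc (uc 0) y2c)
        + cond_mutual_info q xc (uc 1) (\<lambda>w. (uc 0 w, y1c w))
        + cond_mutual_info q xc (uc 2) (\<lambda>w. (uc 0 w, y2c w))"
      using rates[OF dq q_mk q_CI] apply -
      apply (elim exE conjE)
      apply (rule that)
      apply assumption+
      done
    define G1 where "G1 = (\<lambda>w::(nat \<times> nat \<times> nat) \<times> 'x \<times> 'y1 \<times> 'y2. ((uc 0 w, uc 1 w), xc w, y1c w))"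
    define G2 where "G2 = (\<lambda>w::(nat \<times> nat \<times> nat) \<times> 'x \<times> 'y1 \<times> 'y2. ((uc 0 w, uc 2 w), xc w, y2c w))"
    have pG1: "prob p G1 = prob q G1" using q_G1[OF mk] G1_def by simp
    have pG2: "prob p G2 = prob q G2" using q_G2[OF mk] G2_def by simp
    have v1: "cond_mutual_info q xc (uc 0) y1c = cond_mutual_info p xc (uc 0) y1c"
      using cmi_transfer[OF dp dq pG1, of "\<lambda>((u0,u1),x,y). x" "\<lambda>((u0,u1),x,y). u0" "\<lambda>((u0,u1),x,y). y"]
      by (simp add: G1_def)
    have v2: "cond_mutual_info q xc (uc 0) y2c = cond_mutual_info p xc (uc 0) y2c"
      using cmi_transfer[OF dp dq pG2, of "\<lambda>((u0,u1),x,y). x" "\<lambda>((u0,u1),x,y). u0" "\<lambda>((u0,u1),x,y). y"]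
      by (simp add: G2_def)
    have v3: "cond_mutual_info q xc (uc 1) (\<lambda>w. (uc 0 w, y1c w)) = cond_mutual_info p xc (uc 1) (\<lambda>w. (uc 0 w, y1c w))"
      using cmi_transfer[OF dp dq pG1, of "\<lambda>((u0,u1),x,y). x" "\<lambda>((u0,u1),x,y). u1" "\<lambda>((u0,u1),x,y). (u0, y)"]
      by (simp add: G1_def)
    have v4: "cond_mutual_info q xc (uc 2) (\<lambda>w. (uc 0 w, y2c w)) = cond_mutual_info p xc (uc 2) (\<lambda>w. (uc 0 w, y2c w))"
      using cmi_transfer[OF dp dq pG2, of "\<lambda>((u0,u1),x,y). x" "\<lambda>((u0,u1),x,y). u1" "\<lambda>((u0,u1),x,y). (u0, y)"]
      by (simp add: G2_def)
    define v :: "nat set list" where "v = [{1,2},{1},{2}]"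
    define g1' where "g1' = (\<lambda>(f :: nat \<Rightarrow> nat) y. g1 (f 0) (f 1) y)"
    define g2' where "g2' = (\<lambda>(f :: nat \<Rightarrow> nat) y. g2 (f 0) (f 2) y)"
    have x1: "expect q (\<lambda>w. d1 (xc w) (g1' (usub (dec v 1) w) (y1c w))) = expect p (\<lambda>w. d1 (xc w) (g1 (uc 0 w) (uc 1 w) (y1c w)))"
    proof -
      have "expect q (\<lambda>w. (\<lambda>((a,b),x,y). d1 x (g1 a b y)) (G1 w)) = expect p (\<lambda>w. (\<lambda>((a,b),x,y). d1 x (g1 a b y)) (G1 w))"
        by (rule expect_eq_dist[OF dq dp pG1[symmetric]])
      then show ?thesis unfolding v_def dec1 g1'_def G1_def by (simp add: usub_def)
    qed
    have x2: "expect q (\<lambda>w. d2 (xc w) (g2' (usub (dec v 2) w) (y2c w))) = expect p (\<lambda>w. d2 (xc w) (g2 (uc 0 w) (uc 2 w) (y2c w)))"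
    proof -
      have "expect q (\<lambda>w. (\<lambda>((a,b),x,y). d2 x (g2 a b y)) (G2 w)) = expect p (\<lambda>w. (\<lambda>((a,b),x,y). d2 x (g2 a b y)) (G2 w))"
        by (rule expect_eq_dist[OF dq dp pG2[symmetric]])
      then show ?thesis unfolding v_def dec2 g2'_def G2_def by (simp add: usub_def)
    qed
    have feas: "ach_feasible PXY d1 d2 (fst D) (snd D) v q R R'"
      unfolding ach_feasible_def
    proof (intro conjI)
      show "set v = {{1}, {2}, {1, 2}}" unfolding v_def by auto
      show "distinct v" unfolding v_def by auto
      show "is_dist q" by (rule dq)
      show "prob q snd = PXY" using q_PS pPXY by simp
      show "markov q fst xc (\<lambda>w. (y1c w, y2c w))" by (rule q_mk)
      show "\<exists>(g1 :: (nat \<Rightarrow> nat) \<Rightarrow> 'y1 \<Rightarrow> 'z1) (g2 :: (nat \<Rightarrow> nat) \<Rightarrow> 'y2 \<Rightarrow> 'z2).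
        expect q (\<lambda>w. d1 (xc w) (g1 (usub (dec v 1) w) (y1c w))) \<le> fst D \<and>
        expect q (\<lambda>w. d2 (xc w) (g2 (usub (dec v 2) w) (y2c w))) \<le> snd D"
        using x1 x2 g1 g2 by (intro exI[of _ g1'] exI[of _ g2']) simp
      show "\<forall>j<3. 0 \<le> R j \<and> 0 \<le> R' j \<and> mutual_info q (\<lambda>w. (xc w, usub {..<j} w)) (uc j) \<le> R j + R' j"
        by (rule r1)
      show "\<forall>J. J \<noteq> {} \<and> J \<subseteq> dec v 1 \<longrightarrow>
        (\<Sum>j\<in>J. R' j) \<le> (\<Sum>j\<in>J. entropy q (uc j))
           - cond_entropy q (usub J) (\<lambda>w. (usub (dec v 1 - J) w, y1c w))"
        unfolding v_def dec1 by (rule r2)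
      show "\<forall>J. J \<noteq> {} \<and> J \<subseteq> dec v 2 \<longrightarrow>
        (\<Sum>j\<in>J. R' j) \<le> (\<Sum>j\<in>J. entropy q (uc j))
           - cond_entropy q (usub J) (\<lambda>w. (usub (dec v 2 - J) w, y2c w))"
        unfolding v_def dec2 by (rule r3)
    qed
    have "Rach' PXY d1 d2 D \<le> ereal (R 0 + R 1 + R 2)"
      unfolding Rach'_def by (rule Inf_lower) (intro CollectI exI[of _ v] exI[of _ q] exI[of _ R] exI[of _ R'] conjI refl feas)
    also have "\<dots> = z" unfolding z r4 v1 v2 v3 v4 ..
    finally show "Rach' PXY d1 d2 D \<le> z" .
  qed
  show ?thesis using A B by (rule order_trans)
qed


end
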